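(* Let $V=(J,(V_j)_{j\in J},d,H)$ be a hypergraph system and let $(\nu_e)_{e\in H}$ be a pseudorandom system of measures on $V$. For every $e\in H$ let $f_e:V_e\to\mathbb{R}$ satisfy $|f_e(x_e)|\le\nu_e(x_e)$ for all $x_e\in V_e$. Then $$\mathbb{E}\Big(\prod_{e\in H}f_e(\pi_e(x))\ \Big|\ x\in V_J\Big)=O\Big(\inf_{e\in H}\|f_e\|_{\Box^e}\Big)+o_{N\to\infty}(1),$$ where the implicit constants depend only on $J$ and the pseudorandomness constants (not on the functions $f_e$).
   Context: A hypergraph system is a quadruple $V=(J,(V_j)_{j\in J},d,H)$ where $J$ is a finite set, each $V_j$ is a finite nonempty set, $d\ge1$ is an integer and $H\subseteq\binom{J}{d}:=\{e\subseteq J:|e|=d\}$. For $e\subseteq J$ put $V_e:=\prod_{j\in e}V_j$ and let $\pi_e:V_J\to V_e$ be the coordinate projection. For a finite nonempty set $Z$ and $f:Z\to\mathbb{R}$, $\mathbb{E}(f(x)\mid x\in Z):=|Z|^{-1}\sum_{x\in Z}f(x)$; constraints written after the bar mean uniform averaging over all tuples satisfying them. All objects depend on a parameter $N$ ranging over a sequence tending to infinity while $J,d,H$ are fixed; implicit constants may depend on $J$. $o_{x\to0;y}(X)$ denotes a quantity bounded in magnitude by $c(x,y)X$ where $c(x,y)\to0$ as $x\to0$ for each fixed $y$; $O_y(X)$ a quantity bounded by $C(y)X$. Cube notation: for a finite set $e$, $\{0,1\}^e$ is the set of tuples $\omega=(\omega_j)_{j\in e}$ with $\omega_j\in\{0,1\}$,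 and $0^e$ is the all-zero tuple; for $x^{(0)}_J,x^{(1)}_J\in V_J$, $e\subseteq J$ and $\omega\in\{0,1\}^e$, set $x^{(\omega)}_e:=(x^{(\omega_j)}_j)_{j\in e}\in V_e$ and $x^{(a)}_e:=(x^{(a)}_j)_{j\in e}$ for $a\in\{0,1\}$. The Gowers cube norm of $f:V_e\to\mathbb{R}$ is $\|f\|_{\Box^e}:=\mathbb{E}\big(\prod_{\omega\in\{0,1\}^e}f(x^{(\omega)}_e)\mid x^{(0)}_e,x^{(1)}_e\in V_e\big)^{1/2^{|e|}}$. A system of measures is a family of functions $\nu_e:V_e\to[0,\infty)$, $e\in H$, with $\mathbb{E}(\nu_e(x_e)\mid x_e\in V_e)=1+o_{N\to\infty}(1)$. For $e\in H$ and $f:V_e\to\mathbb{R}$, $\mathcal{D}_ef(x^{(0)}_e):=\mathbb{E}\big(\prod_{\omega\in\{0,1\}^e,\ \omega\neq 0^e}f(x^{(\omega)}_e)\mid x^{(1)}_e\in V_e\big)$. The system is pseudorandom if: (i) $\mathcal{D}_e(\nu_e+1)(x_e)=O(1)$ for all $e\in H$, $x_e\in V_e$; (ii) for every choice of exponents $n_{e,\omega}\in\{0,1\}$, $\mathbb{E}\big(\prod_{e\in H}\prod_{\omega\in\{0,1\}^e}\nu_e(x^{(\omega)}_e)^{n_{e,\omega}}\mid x^{(0)}_J,x^{(1)}_J\in V_J\big)=1+o_{N\to\infty}(1)$; (iii) for every $e\in H$, $j\in e$, every choice of $n_{e,\omega}\in\{0,1\}$ and every integer $K\ge0$, $\mathbb{E}\Big(\mathbb{E}\big(\prod_{\omega\in\{0,1\}^e}\nu_e(x^{(\omega)}_e)^{n_{e,\omega}}\mid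 x^{(0)}_j,x^{(1)}_j\in V_j\big)^K\ \Big|\ x^{(0)}_{e\setminus\{j\}},x^{(1)}_{e\setminus\{j\}}\in V_{e\setminus\{j\}}\Big)=O_K(1)$. *)

theory Defs
  imports "HOL-Analysis.Analysis"
begin

definition avg :: "'a set \<Rightarrow> ('a \<Rightarrow> real) \<Rightarrow> real" where
  "avg A g = (\<Sum>x\<in>A. g x) / real (card A)"

definition Vprod :: "('j \<Rightarrow> 'v set) \<Rightarrow> 'j set \<Rightarrow> ('j \<Rightarrow> 'v) set" where
  "Vprod V e = PiE e V"

definition proj :: "'j set \<Rightarrow> ('j \<Rightarrow> 'v) \<Rightarrow> ('j \<Rightarrow> 'v)" where
  "proj e x = restrict x e"

text \<open>The cube {0,1}^e; omega j = True means omega_j = 1.\<close>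
definition cube :: "'j set \<Rightarrow> ('j \<Rightarrow> bool) set" where
  "cube e = PiE e (\<lambda>_. UNIV)"

definition cpt :: "'j set \<Rightarrow> ('j \<Rightarrow> bool) \<Rightarrow> ('j \<Rightarrow> 'v) \<Rightarrow> ('j \<Rightarrow> 'v) \<Rightarrow> ('j \<Rightarrow> 'v)" where
  "cpt e \<omega> x0 x1 = (\<lambda>j\<in>e. if \<omega> j then x1 j else x0 j)"

definition cube_norm :: "('j \<Rightarrow> 'v set) \<Rightarrow> 'j set \<Rightarrow> (('j \<Rightarrow> 'v) \<Rightarrow> real) \<Rightarrow> real" where
  "cube_norm V e f = root (2 ^ card e)
     (avg (Vprod V e \<times> Vprod V e) (\<lambda>(x0, x1). \<Prod>\<omega>\<in>cube e. f (cpt e \<omega> x0 x1)))"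

definition Dop :: "('j \<Rightarrow> 'v set) \<Rightarrow> 'j set \<Rightarrow> (('j \<Rightarrow> 'v) \<Rightarrow> real) \<Rightarrow> ('j \<Rightarrow> 'v) \<Rightarrow> real" where
  "Dop V e f x0 = avg (Vprod V e)
     (\<lambda>x1. \<Prod>\<omega>\<in>cube e - {(\<lambda>j\<in>e. False)}. f (cpt e \<omega> x0 x1))"

text \<open>Hypergraph system (J, (V_j), d, H); here V depends on the parameter N while J, d, H are fixed.\<close>
definition hypergraph_system :: "'j set \<Rightarrow> (nat \<Rightarrow> 'j \<Rightarrow> 'v set) \<Rightarrow> nat \<Rightarrow> 'j set set \<Rightarrow> bool" where
  "hypergraph_system J V d H \<longleftrightarrow> finite J \<and> d \<ge> 1 \<and> H \<subseteq> {e. e \<subseteq> J \<and> card e = d} \<and>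
     (\<forall>N. \<forall>j\<in>J. finite (V N j) \<and> V N j \<noteq> {})"

definition system_of_measures ::
  "'j set \<Rightarrow> (nat \<Rightarrow> 'j \<Rightarrow> 'v set) \<Rightarrow> 'j set set \<Rightarrow> (nat \<Rightarrow> 'j set \<Rightarrow> ('j \<Rightarrow> 'v) \<Rightarrow> real) \<Rightarrow> bool" where
  "system_of_measures J V H \<nu> \<longleftrightarrow>
     (\<forall>N. \<forall>e\<in>H. \<forall>x\<in>Vprod (V N) e. \<nu> N e x \<ge> 0) \<and>
     (\<forall>e\<in>H. (\<lambda>N. avg (Vprod (V N) e) (\<nu> N e)) \<longlonglongrightarrow> 1)"

text \<open>Pseudorandomness conditions (i)-(iii). O(1) means bounded by a constant for all large N.
  Exponents n_{e,omega} in {0,1} are given by a function n with values in {0,1}.\<close>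
definition pseudorandom ::
  "'j set \<Rightarrow> (nat \<Rightarrow> 'j \<Rightarrow> 'v set) \<Rightarrow> 'j set set \<Rightarrow> (nat \<Rightarrow> 'j set \<Rightarrow> ('j \<Rightarrow> 'v) \<Rightarrow> real) \<Rightarrow> bool" where
  "pseudorandom J V H \<nu> \<longleftrightarrow>
     system_of_measures J V H \<nu> \<and>
     \<comment> \<open>(i)\<close>
     (\<exists>C. \<forall>\<^sub>F N in sequentially. \<forall>e\<in>H. \<forall>x\<in>Vprod (V N) e.
          \<bar>Dop (V N) e (\<lambda>y. \<nu> N e y + 1) x\<bar> \<le> C) \<and>
     \<comment> \<open>(ii)\<close>
     (\<forall>n :: 'j set \<Rightarrow> ('j \<Rightarrow> bool) \<Rightarrow> nat. (\<forall>e \<omega>. n e \<omega> \<le> 1) \<longrightarrow>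
        (\<lambda>N. avg (Vprod (V N) J \<times> Vprod (V N) J)
           (\<lambda>(x0, x1). \<Prod>e\<in>H. \<Prod>\<omega>\<in>cube e. \<nu> N e (cpt e \<omega> x0 x1) ^ n e \<omega>)) \<longlonglongrightarrow> 1) \<and>
     \<comment> \<open>(iii)\<close>
     (\<forall>e\<in>H. \<forall>j\<in>e. \<forall>n :: ('j \<Rightarrow> bool) \<Rightarrow> nat. (\<forall>\<omega>. n \<omega> \<le> 1) \<longrightarrow> (\<forall>K::nat.
        (\<exists>C. \<forall>\<^sub>F N in sequentially.
           \<bar>avg (Vprod (V N) (e - {j}) \<times> Vprod (V N) (e - {j}))
             (\<lambda>(x0, x1). (avg (V N j \<times> V N j)
                (\<lambda>(a0, a1). \<Prod>\<omega>\<in>cube e. \<nu> N e (cpt e \<omega> (x0(j := a0)) (x1(j := a1))) ^ n \<omega>)) ^ K)\<bar>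
           \<le> C)))"

end

theory Submission
  imports Defs
begin

definition ovr :: "'j set \<Rightarrow> ('j \<Rightarrow> 'v) \<Rightarrow> ('j \<Rightarrow> 'v) \<Rightarrow> ('j \<Rightarrow> 'v)" where
  "ovr T x z = (\<lambda>i. if i \<in> T then z i else x i)"

lemma ovr_in:
  assumes "x \<in> PiE J V" "z \<in> PiE T V" "T \<subseteq> J"
  shows "ovr T x z \<in> PiE J V"
  using assms unfolding ovr_def PiE_iff extensional_def by auto

lemma ovr_ovr[simp]: "ovr T (ovr T a b) (ovr T c d) = ovr T a d"
  unfolding ovr_def by auto

lemma fiber_sum:
  fixes h :: "('j \<Rightarrow> 'v) \<Rightarrow> real"
  assumes fin: "finite J" "\<forall>i\<in>J. finite (V i)" and ne: "\<forall>i\<in>J. V i \<noteq> {}" and TJ: "T \<subseteq> J"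
  shows "(\<Sum>x\<in>PiE J V. h x) = (\<Sum>x\<in>PiE J V. (\<Sum>z\<in>PiE T V. h (ovr T x z))) / real (card (PiE T V))"
proof -
  let ?X = "PiE J V" and ?Z = "PiE T V"
  define \<phi> where "\<phi> = (\<lambda>(x::'j\<Rightarrow>'v, z::'j\<Rightarrow>'v). (ovr T x z, restrict x T))"
  have finZ: "finite ?Z" using fin TJ by (intro finite_PiE) (auto intro: finite_subset)
  have neZ: "?Z \<noteq> {}" using ne TJ by (auto simp: PiE_eq_empty_iff)
  have cZ: "card ?Z > 0" using finZ neZ by (simp add: card_gt_0_iff)
  have inv: "\<phi> (\<phi> p) = p" if hp: "p \<in> ?X \<times> ?Z" for p
  proof -
    obtain x z where p: "p = (x, z)" "x \<in> ?X" "z \<in> ?Z" using hp by (cases p) auto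
    have "restrict z T = z" using p(3) by (simp add: PiE_iff extensional_restrict)
    moreover have "ovr T (ovr T x z) (restrict x T) = x" unfolding ovr_def by auto
    moreover have "restrict (ovr T x z) T = restrict z T" unfolding ovr_def by auto
    ultimately show ?thesis using p by (simp add: \<phi>_def)
  qed
  have img: "\<phi> ` (?X \<times> ?Z) \<subseteq> ?X \<times> ?Z"
  proof
    fix q assume "q \<in> \<phi> ` (?X \<times> ?Z)"
    then obtain x z where "x \<in> ?X" "z \<in> ?Z" "q = \<phi> (x, z)" by auto
    moreover have "ovr T x z \<in> ?X" using TJ \<open>x \<in> ?X\<close> \<open>z \<in> ?Z\<close> by (rule_tac ovr_in) auto
    moreover have "restrict x T \<in> ?Z" using TJ \<open>x \<in> ?X\<close> by (auto simp: PiE_iff)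
    ultimately show "q \<in> ?X \<times> ?Z" by (simp add: \<phi>_def)
  qed
  have bij: "bij_betw \<phi> (?X \<times> ?Z) (?X \<times> ?Z)"
    by (rule bij_betw_byWitness[where f'=\<phi>]) (use inv img in auto)
  have "(\<Sum>x\<in>?X. \<Sum>z\<in>?Z. h (ovr T x z)) = (\<Sum>p\<in>?X \<times> ?Z. (\<lambda>(y, u). h y) (\<phi> p))"
    by (simp add: sum.cartesian_product \<phi>_def case_prod_beta)
  also have "\<dots> = (\<Sum>p\<in>?X \<times> ?Z. (\<lambda>(y, u). h y) p)"
    by (rule sum.reindex_bij_betw[OF bij])
  also have "\<dots> = (\<Sum>y\<in>?X. \<Sum>u\<in>?Z. h y)"
    by (subst sum.cartesian_product) (simp add: case_prod_beta)
  also have "\<dots> = real (card ?Z) * (\<Sum>y\<in>?X. h y)"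
    by (simp add: sum_distrib_left sum_distrib_right mult.commute)
  finally show ?thesis using cZ by simp
qed

lemma weighted_cs:
  fixes a b w :: "'a \<Rightarrow> real"
  assumes "\<forall>p\<in>P. \<bar>a p\<bar> \<le> w p"
  shows "(\<Sum>p\<in>P. a p * b p)^2 \<le> (\<Sum>p\<in>P. w p) * (\<Sum>p\<in>P. w p * (b p)^2)"
proof -
  have w0: "\<forall>p\<in>P. 0 \<le> w p" using assms by (meson abs_ge_zero order_trans)
  have "\<bar>\<Sum>p\<in>P. a p * b p\<bar> \<le> (\<Sum>p\<in>P. \<bar>a p * b p\<bar>)" by (rule sum_abs)
  also have "\<dots> \<le> (\<Sum>p\<in>P. sqrt (w p) * (sqrt (w p) * \<bar>b p\<bar>))"
  proof (rule sum_mono)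
    fix p assume "p \<in> P"
    then have "\<bar>a p\<bar> * \<bar>b p\<bar> \<le> w p * \<bar>b p\<bar>" using assms by (simp add: mult_right_mono)
    then show "\<bar>a p * b p\<bar> \<le> sqrt (w p) * (sqrt (w p) * \<bar>b p\<bar>)"
      using w0 \<open>p \<in> P\<close> by (simp add: abs_mult mult.assoc[symmetric])
  qed
  finally have 1: "\<bar>\<Sum>p\<in>P. a p * b p\<bar> \<le> (\<Sum>p\<in>P. sqrt (w p) * (sqrt (w p) * \<bar>b p\<bar>))" .
  have "(\<Sum>p\<in>P. a p * b p)^2 = \<bar>\<Sum>p\<in>P. a p * b p\<bar>^2" by simp
  also have "\<dots> \<le> (\<Sum>p\<in>P. sqrt (w p) * (sqrt (w p) * \<bar>b p\<bar>))^2"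
    using 1 by (intro power_mono) auto
  also have "\<dots> \<le> (\<Sum>p\<in>P. (sqrt (w p))^2) * (\<Sum>p\<in>P. (sqrt (w p) * \<bar>b p\<bar>)^2)"
    by (rule Cauchy_Schwarz_ineq_sum)
  also have "\<dots> = (\<Sum>p\<in>P. w p) * (\<Sum>p\<in>P. w p * (b p)^2)"
    using w0 by (intro arg_cong2[where f="(*)"] sum.cong) (auto simp: power_mult_distrib)
  finally show ?thesis .
qed

lemma dsum_cart: "(\<Sum>x0\<in>X. \<Sum>x1\<in>X. g x0 x1) = (\<Sum>p\<in>X \<times> X. g (fst p) (snd p))"
  by (simp add: sum.cartesian_product case_prod_beta)

lemma cs_step:
  fixes A W B :: "('j \<Rightarrow> 'v) \<Rightarrow> ('j \<Rightarrow> 'v) \<Rightarrow> real"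
  assumes fin: "finite J" "\<forall>i\<in>J. finite (V i)" and ne: "\<forall>i\<in>J. V i \<noteq> {}" and TJ: "T \<subseteq> J"
    and invA: "\<And>x0 x1 z. x0 \<in> PiE J V \<Longrightarrow> x1 \<in> PiE J V \<Longrightarrow> z \<in> PiE T V \<Longrightarrow>
        A (ovr T x0 z) x1 = A x0 x1 \<and> A x0 (ovr T x1 z) = A x0 x1"
    and invW: "\<And>x0 x1 z. x0 \<in> PiE J V \<Longrightarrow> x1 \<in> PiE J V \<Longrightarrow> z \<in> PiE T V \<Longrightarrow>
        W (ovr T x0 z) x1 = W x0 x1 \<and> W x0 (ovr T x1 z) = W x0 x1"
    and invB: "\<And>x0 x1 z. x0 \<in> PiE J V \<Longrightarrow> x1 \<in> PiE J V \<Longrightarrow> z \<in> PiE T V \<Longrightarrow>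
        B x0 (ovr T x1 z) = B x0 x1"
    and bnd: "\<And>x0 x1. x0 \<in> PiE J V \<Longrightarrow> x1 \<in> PiE J V \<Longrightarrow> \<bar>A x0 x1\<bar> \<le> W x0 x1"
  shows "(\<Sum>x0\<in>PiE J V. \<Sum>x1\<in>PiE J V. A x0 x1 * B x0 x1)^2
      \<le> (\<Sum>x0\<in>PiE J V. \<Sum>x1\<in>PiE J V. W x0 x1) *
         (\<Sum>x0\<in>PiE J V. \<Sum>x1\<in>PiE J V. W x0 x1 * B x0 x1 * B (ovr T x0 x1) x1)"
    and "0 \<le> (\<Sum>x0\<in>PiE J V. \<Sum>x1\<in>PiE J V. W x0 x1 * B x0 x1 * B (ovr T x0 x1) x1)"
proof -
  let ?X = "PiE J V" and ?Z = "PiE T V"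
  define n where "n = real (card ?Z)"
  have finZ: "finite ?Z" using fin TJ by (intro finite_PiE) (auto intro: finite_subset)
  have neZ: "?Z \<noteq> {}" using ne TJ by (auto simp: PiE_eq_empty_iff)
  have npos: "n > 0" using finZ neZ by (simp add: card_gt_0_iff n_def)
  have FS: "\<And>h. (\<Sum>x\<in>?X. h x) = (\<Sum>x\<in>?X. (\<Sum>z\<in>?Z. h (ovr T x z))) / n"
    unfolding n_def by (rule fiber_sum[OF fin ne TJ])
  have oin: "\<And>x z. x \<in> ?X \<Longrightarrow> z \<in> ?Z \<Longrightarrow> ovr T x z \<in> ?X" using TJ by (simp add: ovr_in)
  define M where "M x0 x1 = (\<Sum>z\<in>?Z. B (ovr T x0 z) x1) / n" for x0 x1
  have W0: "\<And>x0 x1. x0 \<in> ?X \<Longrightarrow> x1 \<in> ?X \<Longrightarrow> 0 \<le> W x0 x1"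
    using bnd by (meson abs_ge_zero order_trans)
  have e1: "(\<Sum>x0\<in>?X. \<Sum>x1\<in>?X. A x0 x1 * B x0 x1) = (\<Sum>x0\<in>?X. \<Sum>x1\<in>?X. A x0 x1 * M x0 x1)"
  proof -
    have "(\<Sum>x0\<in>?X. \<Sum>x1\<in>?X. A x0 x1 * B x0 x1) = (\<Sum>x1\<in>?X. \<Sum>x0\<in>?X. A x0 x1 * B x0 x1)"
      by (rule sum.swap)
    also have "\<dots> = (\<Sum>x1\<in>?X. \<Sum>x0\<in>?X. A x0 x1 * M x0 x1)"
    proof (rule sum.cong[OF refl])
      fix x1 assume x1: "x1 \<in> ?X"
      have "(\<Sum>x0\<in>?X. A x0 x1 * B x0 x1) = (\<Sum>x0\<in>?X. (\<Sum>z\<in>?Z. A (ovr T x0 z) x1 * B (ovr T x0 z) x1)) / n"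
        by (rule FS)
      also have "\<dots> = (\<Sum>x0\<in>?X. (\<Sum>z\<in>?Z. A x0 x1 * B (ovr T x0 z) x1)) / n"
        using invA x1 by simp
      also have "\<dots> = (\<Sum>x0\<in>?X. A x0 x1 * M x0 x1)"
        by (simp add: M_def sum_distrib_left sum_divide_distrib)
      finally show "(\<Sum>x0\<in>?X. A x0 x1 * B x0 x1) = (\<Sum>x0\<in>?X. A x0 x1 * M x0 x1)" .
    qed
    also have "\<dots> = (\<Sum>x0\<in>?X. \<Sum>x1\<in>?X. A x0 x1 * M x0 x1)"
      by (rule sum.swap)
    finally show ?thesis .
  qed
  define h where "h x0 x1 = W x0 x1 * B x0 x1 * B (ovr T x0 x1) x1" for x0 x1
  have pt: "h (ovr T x0 z) (ovr T x1 z') = W x0 x1 * B (ovr T x0 z) x1 * B (ovr T x0 z') x1"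
    if "x0 \<in> ?X" "x1 \<in> ?X" "z \<in> ?Z" "z' \<in> ?Z" for x0 x1 z z'
  proof -
    have o1: "ovr T x0 z \<in> ?X" using oin that by blast
    have o2: "ovr T x1 z' \<in> ?X" using oin that by blast
    have o3: "ovr T x0 z' \<in> ?X" using oin that by blast
    have "W (ovr T x0 z) (ovr T x1 z') = W x0 (ovr T x1 z')" using invW[OF that(1) o2 that(3)] by simp
    also have "\<dots> = W x0 x1" using invW[OF that(1) that(2) that(4)] by simp
    finally have 1: "W (ovr T x0 z) (ovr T x1 z') = W x0 x1" .
    have 2: "B (ovr T x0 z) (ovr T x1 z') = B (ovr T x0 z) x1" using invB[OF o1 that(2) that(4)] .
    have 3: "B (ovr T (ovr T x0 z) (ovr T x1 z')) (ovr T x1 z') = B (ovr T x0 z') x1"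
      using invB[OF o3 that(2) that(4)] by simp
    show ?thesis unfolding h_def 1 2 3 ..
  qed
  have FS': "(\<Sum>x\<in>?X. g x) = (\<Sum>x\<in>?X. (\<Sum>z\<in>?Z. g (ovr T x z)) / n)" for g
    using FS[of g] by (simp add: sum_divide_distrib)
  have inner: "(\<Sum>z\<in>?Z. (\<Sum>z'\<in>?Z. h (ovr T x0 z) (ovr T x1 z')) / n) / n = W x0 x1 * (M x0 x1)^2"
    if x0: "x0 \<in> ?X" and x1: "x1 \<in> ?X" for x0 x1
  proof -
    have "(\<Sum>z\<in>?Z. (\<Sum>z'\<in>?Z. h (ovr T x0 z) (ovr T x1 z')) / n) / n
        = (\<Sum>z\<in>?Z. (\<Sum>z'\<in>?Z. W x0 x1 * B (ovr T x0 z) x1 * B (ovr T x0 z') x1) / n) / n"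
      using pt x0 x1 by simp
    also have "\<dots> = (\<Sum>z\<in>?Z. \<Sum>z'\<in>?Z. W x0 x1 * (B (ovr T x0 z) x1 * B (ovr T x0 z') x1)) / (n * n)"
      by (simp add: sum_divide_distrib[symmetric] mult.assoc)
    also have "(\<Sum>z\<in>?Z. \<Sum>z'\<in>?Z. W x0 x1 * (B (ovr T x0 z) x1 * B (ovr T x0 z') x1))
        = W x0 x1 * ((\<Sum>z\<in>?Z. B (ovr T x0 z) x1) * (\<Sum>z'\<in>?Z. B (ovr T x0 z') x1))"
      unfolding sum_product by (simp add: sum_distrib_left)
    also have "W x0 x1 * ((\<Sum>z\<in>?Z. B (ovr T x0 z) x1) * (\<Sum>z'\<in>?Z. B (ovr T x0 z') x1)) / (n * n)
        = W x0 x1 * (M x0 x1)^2"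
      by (simp add: M_def power2_eq_square)
    finally show ?thesis .
  qed
  have e2: "(\<Sum>x0\<in>?X. \<Sum>x1\<in>?X. h x0 x1) = (\<Sum>x0\<in>?X. \<Sum>x1\<in>?X. W x0 x1 * (M x0 x1)^2)"
  proof -
    have "(\<Sum>x0\<in>?X. \<Sum>x1\<in>?X. h x0 x1) = (\<Sum>x0\<in>?X. \<Sum>x1\<in>?X. (\<Sum>z'\<in>?Z. h x0 (ovr T x1 z')) / n)"
    proof (rule sum.cong[OF refl])
      fix x0 show "(\<Sum>x1\<in>?X. h x0 x1) = (\<Sum>x1\<in>?X. (\<Sum>z'\<in>?Z. h x0 (ovr T x1 z')) / n)"
        by (rule FS')
    qed
    also have "\<dots> = (\<Sum>x1\<in>?X. \<Sum>x0\<in>?X. (\<Sum>z'\<in>?Z. h x0 (ovr T x1 z')) / n)"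
      by (rule sum.swap)
    also have "\<dots> = (\<Sum>x1\<in>?X. \<Sum>x0\<in>?X. W x0 x1 * (M x0 x1)^2)"
    proof (rule sum.cong[OF refl])
      fix x1 assume x1: "x1 \<in> ?X"
      have "(\<Sum>x0\<in>?X. (\<Sum>z'\<in>?Z. h x0 (ovr T x1 z')) / n)
          = (\<Sum>x0\<in>?X. (\<Sum>z\<in>?Z. (\<Sum>z'\<in>?Z. h (ovr T x0 z) (ovr T x1 z')) / n) / n)"
        by (rule FS')
      also have "\<dots> = (\<Sum>x0\<in>?X. W x0 x1 * (M x0 x1)^2)"
        using inner x1 by (intro sum.cong refl) auto
      finally show "(\<Sum>x0\<in>?X. (\<Sum>z'\<in>?Z. h x0 (ovr T x1 z')) / n) = (\<Sum>x0\<in>?X. W x0 x1 * (M x0 x1)^2)" .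
    qed
    also have "\<dots> = (\<Sum>x0\<in>?X. \<Sum>x1\<in>?X. W x0 x1 * (M x0 x1)^2)"
      by (rule sum.swap)
    finally show ?thesis .
  qed
  have cs: "(\<Sum>p\<in>?X \<times> ?X. A (fst p) (snd p) * M (fst p) (snd p))^2
      \<le> (\<Sum>p\<in>?X \<times> ?X. W (fst p) (snd p)) * (\<Sum>p\<in>?X \<times> ?X. W (fst p) (snd p) * (M (fst p) (snd p))^2)"
    using bnd by (intro weighted_cs) auto
  show "(\<Sum>x0\<in>PiE J V. \<Sum>x1\<in>PiE J V. A x0 x1 * B x0 x1)^2
      \<le> (\<Sum>x0\<in>PiE J V. \<Sum>x1\<in>PiE J V. W x0 x1) *
         (\<Sum>x0\<in>PiE J V. \<Sum>x1\<in>PiE J V. W x0 x1 * B x0 x1 * B (ovr T x0 x1) x1)"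
    using cs e1 e2 unfolding h_def dsum_cart by simp
  have "0 \<le> (\<Sum>x0\<in>?X. \<Sum>x1\<in>?X. W x0 x1 * (M x0 x1)^2)"
    using W0 by (intro sum_nonneg) auto
  then show "0 \<le> (\<Sum>x0\<in>PiE J V. \<Sum>x1\<in>PiE J V. W x0 x1 * B x0 x1 * B (ovr T x0 x1) x1)"
    using e2 unfolding h_def by simp
qed

definition Om :: "'j set \<Rightarrow> 'j set \<Rightarrow> ('j \<Rightarrow> bool) set" where
  "Om S e = {w \<in> cube e. \<forall>i\<in>e. w i \<longrightarrow> i \<in> S}"

definition Pr :: "'j set set \<Rightarrow> ('j set \<Rightarrow> ('j \<Rightarrow> bool) set) \<Rightarrow> ('j set \<Rightarrow> ('j \<Rightarrow> 'v) \<Rightarrow> real)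
    \<Rightarrow> ('j \<Rightarrow> 'v) \<Rightarrow> ('j \<Rightarrow> 'v) \<Rightarrow> real" where
  "Pr H K g x0 x1 = (\<Prod>e\<in>H. \<Prod>w\<in>K e. g e (cpt e w x0 x1))"

definition GG :: "'j set \<Rightarrow> ('j set \<Rightarrow> ('j \<Rightarrow> 'v) \<Rightarrow> real) \<Rightarrow> ('j set \<Rightarrow> ('j \<Rightarrow> 'v) \<Rightarrow> real)
    \<Rightarrow> 'j set \<Rightarrow> ('j \<Rightarrow> 'v) \<Rightarrow> real" where
  "GG S f \<nu> e = (if S \<subseteq> e then f e else \<nu> e)"

definition PP where "PP H S f \<nu> = Pr H (Om S) (GG S f \<nu>)"

lemma finite_cube: "finite e \<Longrightarrow> finite (cube e)"
  unfolding cube_def by (intro finite_PiE) auto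

lemma Om_sub: "Om S e \<subseteq> cube e" unfolding Om_def by auto

lemma finite_Om: "finite e \<Longrightarrow> finite (Om S e)"
  using finite_cube Om_sub finite_subset by metis

lemma Om_notin: "j \<notin> e \<Longrightarrow> Om (insert j S) e = Om S e"
  unfolding Om_def by auto

lemma Om_in_j: "w \<in> Om S e \<Longrightarrow> j \<in> e \<Longrightarrow> j \<notin> S \<Longrightarrow> w j = False"
  unfolding Om_def by auto

lemma Om_in:
  assumes "j \<in> e" "j \<notin> S"
  shows "Om (insert j S) e = Om S e \<union> (\<lambda>w. w(j := True)) ` Om S e"
proof
  show "Om (insert j S) e \<subseteq> Om S e \<union> (\<lambda>w. w(j := True)) ` Om S e"
  proof
    fix w assume w: "w \<in> Om (insert j S) e"
    show "w \<in> Om S e \<union> (\<lambda>w. w(j := True)) ` Om S e"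
    proof (cases "w j")
      case True
      have "w(j := False) \<in> Om S e" using w assms unfolding Om_def cube_def by (auto simp: PiE_iff extensional_def)
      moreover have "w = (w(j := False))(j := True)" using True by (auto simp: fun_eq_iff)
      ultimately show ?thesis by blast
    next
      case False
      then have "w \<in> Om S e" using w unfolding Om_def by auto
      then show ?thesis by blast
    qed
  qed
  show "Om S e \<union> (\<lambda>w. w(j := True)) ` Om S e \<subseteq> Om (insert j S) e"
    using assms unfolding Om_def cube_def by (auto simp: PiE_iff extensional_def split: if_splits)
qed

lemma Om_disj: "j \<in> e \<Longrightarrow> j \<notin> S \<Longrightarrow> Om S e \<inter> (\<lambda>w. w(j := True)) ` Om S e = {}"
  using Om_in_j by fastforce

lemma Om_inj: "j \<in> e \<Longrightarrow> j \<notin> S \<Longrightarrow> inj_on (\<lambda>w. w(j := True)) (Om S e)"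
proof (rule inj_onI)
  fix a b assume h: "j \<in> e" "j \<notin> S" "a \<in> Om S e" "b \<in> Om S e" and eq: "a(j := True) = b(j := True)"
  show "a = b"
  proof (rule ext)
    fix i show "a i = b i"
    proof (cases "i = j")
      case True then show ?thesis using Om_in_j[OF h(3) h(1) h(2)] Om_in_j[OF h(4) h(1) h(2)] by simp
    next
      case False
      have "(a(j := True)) i = (b(j := True)) i" using eq by simp
      then show ?thesis using False by simp
    qed
  qed
qed

lemma cpt_flip: "j \<in> e \<Longrightarrow> cpt e (w(j := True)) x0 x1 = cpt e w (ovr {j} x0 x1) x1"
  unfolding cpt_def ovr_def by auto

lemma cpt_ovr0: "T \<inter> e = {} \<Longrightarrow> cpt e w (ovr T x0 z) x1 = cpt e w x0 x1"
  unfolding cpt_def ovr_def by (auto intro!: restrict_ext)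

lemma cpt_ovr1: "(\<forall>i\<in>e. w i \<longrightarrow> i \<notin> T) \<Longrightarrow> cpt e w x0 (ovr T x1 z) = cpt e w x0 x1"
  unfolding cpt_def ovr_def by (auto intro!: restrict_ext)

lemma cpt_in: "x0 \<in> PiE J V \<Longrightarrow> x1 \<in> PiE J V \<Longrightarrow> e \<subseteq> J \<Longrightarrow> cpt e w x0 x1 \<in> PiE e V"
  unfolding cpt_def by (auto simp: PiE_iff)

lemma prod_split: "finite H \<Longrightarrow> prod g H = prod g {e\<in>H. P e} * prod g {e\<in>H. \<not> P e}"
proof -
  assume "finite H"
  then have "prod g ({e\<in>H. P e} \<union> {e\<in>H. \<not> P e}) = prod g {e\<in>H. P e} * prod g {e\<in>H. \<not> P e}"
    by (intro prod.union_disjoint) auto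
  moreover have "{e\<in>H. P e} \<union> {e\<in>H. \<not> P e} = H" by auto
  ultimately show ?thesis by simp
qed

lemma Pr_bound:
  assumes "\<forall>e\<in>H. e \<subseteq> J" "x0 \<in> PiE J V" "x1 \<in> PiE J V"
    and "\<forall>e\<in>H. \<forall>y\<in>PiE e V. \<bar>g e y\<bar> \<le> \<nu> e y"
  shows "\<bar>Pr H K g x0 x1\<bar> \<le> Pr H K \<nu> x0 x1"
proof -
  have b: "0 \<le> \<bar>g e (cpt e w x0 x1)\<bar> \<and> \<bar>g e (cpt e w x0 x1)\<bar> \<le> \<nu> e (cpt e w x0 x1)" if "e \<in> H" for e w
  proof -
    have "cpt e w x0 x1 \<in> PiE e V" using cpt_in[OF assms(2,3)] assms(1) that by blast
    then show ?thesis using assms(4) that by auto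
  qed
  have "\<bar>Pr H K g x0 x1\<bar> = (\<Prod>e\<in>H. \<Prod>w\<in>K e. \<bar>g e (cpt e w x0 x1)\<bar>)"
    unfolding Pr_def abs_prod ..
  also have "\<dots> \<le> Pr H K \<nu> x0 x1"
    unfolding Pr_def
  proof (rule prod_mono, rule conjI)
    fix e assume e: "e \<in> H"
    show "0 \<le> (\<Prod>w\<in>K e. \<bar>g e (cpt e w x0 x1)\<bar>)" by (intro prod_nonneg) auto
    show "(\<Prod>w\<in>K e. \<bar>g e (cpt e w x0 x1)\<bar>) \<le> (\<Prod>w\<in>K e. \<nu> e (cpt e w x0 x1))"
      using b[OF e] by (intro prod_mono) auto
  qed
  finally show ?thesis .
qed

lemma GG_bound:
  assumes "\<forall>e\<in>H. \<forall>y\<in>PiE e V. \<bar>f e y\<bar> \<le> \<nu> e y"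
  shows "\<forall>e\<in>H. \<forall>y\<in>PiE e V. \<bar>GG S f \<nu> e y\<bar> \<le> \<nu> e y"
proof (intro ballI)
  fix e y assume "e \<in> H" "y \<in> PiE e V"
  then have h: "\<bar>f e y\<bar> \<le> \<nu> e y" using assms by blast
  then have "0 \<le> \<nu> e y" using abs_ge_zero[of "f e y"] by linarith
  then show "\<bar>GG S f \<nu> e y\<bar> \<le> \<nu> e y" using h unfolding GG_def by auto
qed

lemma step_PP:
  fixes f \<nu> :: "'j set \<Rightarrow> ('j \<Rightarrow> 'v) \<Rightarrow> real"
  assumes fin: "finite J" "\<forall>i\<in>J. finite (V i)" and ne: "\<forall>i\<in>J. V i \<noteq> {}"
    and HJ: "\<forall>e\<in>H. e \<subseteq> J" and finH: "finite H"
    and j: "j \<in> J" "j \<notin> S"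
    and fb: "\<forall>e\<in>H. \<forall>y\<in>PiE e V. \<bar>f e y\<bar> \<le> \<nu> e y"
  shows "(\<Sum>x0\<in>PiE J V. \<Sum>x1\<in>PiE J V. PP H S f \<nu> x0 x1)^2
      \<le> (\<Sum>x0\<in>PiE J V. \<Sum>x1\<in>PiE J V. Pr {e\<in>H. j \<notin> e} (Om S) \<nu> x0 x1) *
         (\<Sum>x0\<in>PiE J V. \<Sum>x1\<in>PiE J V. PP H (insert j S) f \<nu> x0 x1)"
    and "0 \<le> (\<Sum>x0\<in>PiE J V. \<Sum>x1\<in>PiE J V. PP H (insert j S) f \<nu> x0 x1)"
proof -
  let ?X = "PiE J V"
  define HA where "HA = {e\<in>H. j \<notin> e}"
  define HB where "HB = {e\<in>H. j \<in> e}"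
  define A where "A = Pr HA (Om S) (GG S f \<nu>)"
  define B where "B = Pr HB (Om S) (GG S f \<nu>)"
  define W where "W = Pr HA (Om S) \<nu>"
  have split: "prod g H = prod g HA * prod g HB" for g :: "'j set \<Rightarrow> real"
    using prod_split[OF finH, of g "\<lambda>e. j \<notin> e"] unfolding HA_def HB_def by simp
  have finHB: "finite HB" using finH unfolding HB_def by simp
  have fine: "\<And>e. e \<in> H \<Longrightarrow> finite e" using HJ fin(1) finite_subset by blast
  have PPS: "PP H S f \<nu> x0 x1 = A x0 x1 * B x0 x1" for x0 x1
    unfolding PP_def Pr_def A_def B_def by (rule split)
  have PPI: "PP H (insert j S) f \<nu> x0 x1 = W x0 x1 * B x0 x1 * B (ovr {j} x0 x1) x1" for x0 x1
  proof -
    have 1: "(\<Prod>e\<in>HA. \<Prod>w\<in>Om (insert j S) e. GG (insert j S) f \<nu> e (cpt e w x0 x1)) = W x0 x1"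
      unfolding W_def Pr_def
    proof (rule prod.cong[OF refl])
      fix e assume "e \<in> HA"
      then have "j \<notin> e" unfolding HA_def by simp
      then show "(\<Prod>w\<in>Om (insert j S) e. GG (insert j S) f \<nu> e (cpt e w x0 x1)) = (\<Prod>w\<in>Om S e. \<nu> e (cpt e w x0 x1))"
        by (simp add: Om_notin GG_def)
    qed
    have 2: "(\<Prod>w\<in>Om (insert j S) e. GG (insert j S) f \<nu> e (cpt e w x0 x1))
        = (\<Prod>w\<in>Om S e. GG S f \<nu> e (cpt e w x0 x1)) * (\<Prod>w\<in>Om S e. GG S f \<nu> e (cpt e w (ovr {j} x0 x1) x1))"
      if e: "e \<in> HB" for e
    proof -
      have je: "j \<in> e" and eH: "e \<in> H" using e unfolding HB_def by auto
      have G: "GG (insert j S) f \<nu> e = GG S f \<nu> e" using je unfolding GG_def by auto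
      have fo: "finite (Om S e)" using finite_Om fine[OF eH] by blast
      have "(\<Prod>w\<in>Om (insert j S) e. GG S f \<nu> e (cpt e w x0 x1))
          = (\<Prod>w\<in>Om S e. GG S f \<nu> e (cpt e w x0 x1)) * (\<Prod>w\<in>(\<lambda>w. w(j := True)) ` Om S e. GG S f \<nu> e (cpt e w x0 x1))"
        unfolding Om_in[OF je j(2)] using fo Om_disj[OF je j(2)] by (intro prod.union_disjoint) auto
      also have "(\<Prod>w\<in>(\<lambda>w. w(j := True)) ` Om S e. GG S f \<nu> e (cpt e w x0 x1))
          = (\<Prod>w\<in>Om S e. GG S f \<nu> e (cpt e (w(j := True)) x0 x1))"
        using prod.reindex[OF Om_inj[OF je j(2)]] by simp
      also have "\<dots> = (\<Prod>w\<in>Om S e. GG S f \<nu> e (cpt e w (ovr {j} x0 x1) x1))"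
        by (intro prod.cong refl arg_cong[where f="GG S f \<nu> e"] cpt_flip[OF je])
      finally show ?thesis unfolding G .
    qed
    have "PP H (insert j S) f \<nu> x0 x1
        = (\<Prod>e\<in>HA. \<Prod>w\<in>Om (insert j S) e. GG (insert j S) f \<nu> e (cpt e w x0 x1))
          * (\<Prod>e\<in>HB. \<Prod>w\<in>Om (insert j S) e. GG (insert j S) f \<nu> e (cpt e w x0 x1))"
      unfolding PP_def Pr_def by (rule split)
    also have "\<dots> = W x0 x1 * (B x0 x1 * B (ovr {j} x0 x1) x1)"
      unfolding 1 B_def Pr_def using 2 by (simp add: prod.distrib)
    finally show ?thesis by (simp add: mult.assoc)
  qed
  have TJ: "{j} \<subseteq> J" using j by simp
  have invHA: "Pr HA K g (ovr {j} x0 z) x1 = Pr HA K g x0 x1 \<and> Pr HA K g x0 (ovr {j} x1 z) = Pr HA K g x0 x1" for K g x0 x1 z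
  proof -
    have "\<And>e w. e \<in> HA \<Longrightarrow> cpt e w (ovr {j} x0 z) x1 = cpt e w x0 x1"
      by (rule cpt_ovr0) (auto simp: HA_def)
    moreover have "\<And>e w. e \<in> HA \<Longrightarrow> cpt e w x0 (ovr {j} x1 z) = cpt e w x0 x1"
      by (rule cpt_ovr1) (auto simp: HA_def)
    ultimately show ?thesis unfolding Pr_def by simp
  qed
  have invB: "B x0 (ovr {j} x1 z) = B x0 x1" for x0 x1 z
  proof -
    have "\<And>e w. e \<in> HB \<Longrightarrow> w \<in> Om S e \<Longrightarrow> cpt e w x0 (ovr {j} x1 z) = cpt e w x0 x1"
      by (rule cpt_ovr1) (use j in \<open>auto simp: Om_def\<close>)
    then show ?thesis unfolding B_def Pr_def by simp
  qed
  have bnd: "\<bar>A x0 x1\<bar> \<le> W x0 x1" if "x0 \<in> ?X" "x1 \<in> ?X" for x0 x1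
    unfolding A_def W_def
    by (rule Pr_bound) (use HJ that GG_bound[OF fb] in \<open>auto simp: HA_def\<close>)
  note cs = cs_step[OF fin ne TJ, of A W B]
  have iA: "A (ovr {j} x0 z) x1 = A x0 x1 \<and> A x0 (ovr {j} x1 z) = A x0 x1" for x0 x1 z
    unfolding A_def by (rule invHA)
  have iW: "W (ovr {j} x0 z) x1 = W x0 x1 \<and> W x0 (ovr {j} x1 z) = W x0 x1" for x0 x1 z
    unfolding W_def by (rule invHA)
  have c1: "(\<Sum>x0\<in>?X. \<Sum>x1\<in>?X. A x0 x1 * B x0 x1)^2
      \<le> (\<Sum>x0\<in>?X. \<Sum>x1\<in>?X. W x0 x1) * (\<Sum>x0\<in>?X. \<Sum>x1\<in>?X. W x0 x1 * B x0 x1 * B (ovr {j} x0 x1) x1)"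
    by (rule cs(1)) (simp_all add: iA iW invB bnd)
  have c2: "0 \<le> (\<Sum>x0\<in>?X. \<Sum>x1\<in>?X. W x0 x1 * B x0 x1 * B (ovr {j} x0 x1) x1)"
    by (rule cs(2)) (simp_all add: iA iW invB bnd)
  show "(\<Sum>x0\<in>PiE J V. \<Sum>x1\<in>PiE J V. PP H S f \<nu> x0 x1)^2
      \<le> (\<Sum>x0\<in>PiE J V. \<Sum>x1\<in>PiE J V. Pr {e\<in>H. j \<notin> e} (Om S) \<nu> x0 x1) *
         (\<Sum>x0\<in>PiE J V. \<Sum>x1\<in>PiE J V. PP H (insert j S) f \<nu> x0 x1)"
    using c1 unfolding PPS PPI W_def HA_def by simp
  show "0 \<le> (\<Sum>x0\<in>PiE J V. \<Sum>x1\<in>PiE J V. PP H (insert j S) f \<nu> x0 x1)"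
    using c2 unfolding PPI by simp
qed

lemma avg_pair:
  "avg (X \<times> X) (\<lambda>(x0, x1). g x0 x1) = (\<Sum>x0\<in>X. \<Sum>x1\<in>X. g x0 x1) / (real (card X))^2"
  unfolding avg_def by (simp add: sum.cartesian_product card_cartesian_product power2_eq_square)

lemma ii_K:
  assumes pr: "pseudorandom J V H \<nu>" and fine: "\<forall>e\<in>H. finite e" and K: "\<forall>e\<in>H. K e \<subseteq> cube e"
  shows "(\<lambda>N. avg (Vprod (V N) J \<times> Vprod (V N) J) (\<lambda>(x0, x1). Pr H K (\<nu> N) x0 x1)) \<longlonglongrightarrow> 1"
proof -
  define n where "n e w = (if w \<in> K e then 1 else 0 :: nat)" for e and w :: "'a \<Rightarrow> bool"
  have n1: "\<forall>e w. n e w \<le> 1" unfolding n_def by simp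
  from pr n1 have lim: "(\<lambda>N. avg (Vprod (V N) J \<times> Vprod (V N) J)
           (\<lambda>(x0, x1). \<Prod>e\<in>H. \<Prod>w\<in>cube e. \<nu> N e (cpt e w x0 x1) ^ n e w)) \<longlonglongrightarrow> 1"
    unfolding pseudorandom_def by blast
  have eq: "(\<Prod>e\<in>H. \<Prod>w\<in>cube e. \<nu> N e (cpt e w x0 x1) ^ n e w) = Pr H K (\<nu> N) x0 x1" for N x0 x1
    unfolding Pr_def
  proof (rule prod.cong[OF refl])
    fix e assume e: "e \<in> H"
    have "(\<Prod>w\<in>cube e. \<nu> N e (cpt e w x0 x1) ^ n e w) = (\<Prod>w\<in>cube e. if w \<in> K e then \<nu> N e (cpt e w x0 x1) else 1)"
      unfolding n_def by (intro prod.cong refl) auto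
    also have "\<dots> = (\<Prod>w\<in>cube e \<inter> K e. \<nu> N e (cpt e w x0 x1))"
      using finite_cube fine e by (intro prod.inter_restrict[symmetric]) auto
    also have "cube e \<inter> K e = K e" using K e by auto
    finally show "(\<Prod>w\<in>cube e. \<nu> N e (cpt e w x0 x1) ^ n e w) = (\<Prod>w\<in>K e. \<nu> N e (cpt e w x0 x1))" .
  qed
  show ?thesis using lim unfolding eq .
qed

lemma Om_empty: "Om {} e = {restrict (\<lambda>_. False) e}"
proof -
  have "w = restrict (\<lambda>_. False) e" if "w \<in> cube e" "\<forall>i\<in>e. \<not> w i" for w :: "'a \<Rightarrow> bool"
    using that unfolding cube_def by (auto simp: PiE_iff extensional_def fun_eq_iff)
  then show ?thesis unfolding Om_def cube_def by auto
qed

lemma PP_empty: "PP H {} f \<nu> x0 x1 = (\<Prod>e\<in>H. f e (proj e x0))"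
proof -
  have "cpt e (restrict (\<lambda>_. False) e) x0 x1 = proj e x0" for e
    unfolding cpt_def proj_def by auto
  then show ?thesis unfolding PP_def Pr_def Om_empty GG_def by simp
qed

lemma hs_facts:
  assumes "hypergraph_system J V d H"
  shows "finite J" "\<And>N. \<forall>i\<in>J. finite (V N i)" "\<And>N. \<forall>i\<in>J. V N i \<noteq> {}"
    "\<forall>e\<in>H. e \<subseteq> J" "finite H" "\<forall>e\<in>H. finite e" "\<forall>e\<in>H. card e = d" "d \<ge> 1"
proof -
  show fJ: "finite J" and "\<And>N. \<forall>i\<in>J. finite (V N i)" "\<And>N. \<forall>i\<in>J. V N i \<noteq> {}" and HJ: "\<forall>e\<in>H. e \<subseteq> J"
    and "\<forall>e\<in>H. card e = d" "d \<ge> 1"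
    using assms unfolding hypergraph_system_def by auto
  show "finite H" using HJ fJ by (meson Pow_iff finite_Pow_iff finite_subset subsetI)
  show "\<forall>e\<in>H. finite e" using HJ fJ finite_subset by blast
qed

lemma avg_nonneg: "(\<And>x. x \<in> A \<Longrightarrow> 0 \<le> g x) \<Longrightarrow> 0 \<le> avg A g"
  unfolding avg_def by (intro divide_nonneg_nonneg sum_nonneg) auto

lemma nu_nonneg:
  assumes "pseudorandom J V H \<nu>" "e \<in> H" "y \<in> PiE e (V N)"
  shows "0 \<le> \<nu> N e y"
  using assms unfolding pseudorandom_def system_of_measures_def Vprod_def by blast

lemma Pr_nonneg:
  assumes "pseudorandom J V H \<nu>" "\<forall>e\<in>H'. e \<subseteq> J" "H' \<subseteq> H" "x0 \<in> PiE J (V N)" "x1 \<in> PiE J (V N)"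
  shows "0 \<le> Pr H' K (\<nu> N) x0 x1"
  unfolding Pr_def
proof (intro prod_nonneg)
  fix e w assume e: "e \<in> H'"
  have "cpt e w x0 x1 \<in> PiE e (V N)" using cpt_in[OF assms(4,5)] assms(2) e by blast
  then show "0 \<le> \<nu> N e (cpt e w x0 x1)" using nu_nonneg[OF assms(1)] assms(3) e by blast
qed

lemma claim:
  assumes hs: "hypergraph_system J V d H" and pr: "pseudorandom J V H \<nu>" and SJ: "S \<subseteq> J"
  shows "\<exists>c. c \<longlonglongrightarrow> 1 \<and> (\<forall>N. 0 \<le> c N) \<and> (\<forall>N f. (\<forall>e\<in>H. \<forall>x\<in>Vprod (V N) e. \<bar>f e x\<bar> \<le> \<nu> N e x) \<longrightarrow>
     \<bar>avg (Vprod (V N) J) (\<lambda>x. \<Prod>e'\<in>H. f e' (proj e' x))\<bar> ^ (2 ^ card S)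
       \<le> c N * \<bar>avg (Vprod (V N) J \<times> Vprod (V N) J) (\<lambda>(x0, x1). PP H S f (\<nu> N) x0 x1)\<bar>)"
proof -
  note hf = hs_facts[OF hs]
  have finS: "finite S" using SJ hf(1) finite_subset by blast
  have cardpos: "0 < card (Vprod (V N) J)" for N
  proof -
    have "finite (PiE J (V N))" using hf(1,2) by (intro finite_PiE) auto
    moreover have "PiE J (V N) \<noteq> {}" using hf(3) by (simp add: PiE_eq_empty_iff)
    ultimately show ?thesis unfolding Vprod_def by (simp add: card_gt_0_iff)
  qed
  show ?thesis using finS SJ
  proof (induction S rule: finite_subset_induct)
    case empty
    have "avg (Vprod (V N) J \<times> Vprod (V N) J) (\<lambda>(x0, x1). PP H {} f (\<nu> N) x0 x1)
        = avg (Vprod (V N) J) (\<lambda>x. \<Prod>e'\<in>H. f e' (proj e' x))" for N f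
    proof -
      let ?X = "Vprod (V N) J"
      have m: "0 < real (card ?X)" using cardpos by simp
      have "avg (?X \<times> ?X) (\<lambda>(x0, x1). PP H {} f (\<nu> N) x0 x1)
          = (\<Sum>x0\<in>?X. \<Sum>x1\<in>?X. (\<Prod>e\<in>H. f e (proj e x0))) / (real (card ?X))^2"
        unfolding avg_pair PP_empty ..
      also have "\<dots> = (real (card ?X) * (\<Sum>x0\<in>?X. (\<Prod>e\<in>H. f e (proj e x0)))) / (real (card ?X))^2"
        by (simp add: sum_distrib_left)
      also have "\<dots> = avg ?X (\<lambda>x. \<Prod>e'\<in>H. f e' (proj e' x))"
        unfolding avg_def using m by (simp add: power2_eq_square)
      finally show ?thesis .
    qed
    then show ?case by (intro exI[of _ "\<lambda>_. 1"]) simp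
  next
    case (insert j S)
    then obtain c where c: "c \<longlonglongrightarrow> 1" "\<forall>N. 0 \<le> c N"
      and cb: "\<forall>N f. (\<forall>e\<in>H. \<forall>x\<in>Vprod (V N) e. \<bar>f e x\<bar> \<le> \<nu> N e x) \<longrightarrow>
     \<bar>avg (Vprod (V N) J) (\<lambda>x. \<Prod>e'\<in>H. f e' (proj e' x))\<bar> ^ (2 ^ card S)
       \<le> c N * \<bar>avg (Vprod (V N) J \<times> Vprod (V N) J) (\<lambda>(x0, x1). PP H S f (\<nu> N) x0 x1)\<bar>"
      by blast
    define aW where "aW N = avg (Vprod (V N) J \<times> Vprod (V N) J) (\<lambda>(x0, x1). Pr {e\<in>H. j \<notin> e} (Om S) (\<nu> N) x0 x1)" for N
    define K where "K e = (if j \<notin> e then Om S e else {})" for e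
    have PrK: "Pr H K g x0 x1 = Pr {e\<in>H. j \<notin> e} (Om S) g x0 x1" for g :: "'a set \<Rightarrow> ('a \<Rightarrow> 'b) \<Rightarrow> real" and x0 x1
    proof -
      have "Pr H K g x0 x1 = (\<Prod>e\<in>{e\<in>H. j \<notin> e}. \<Prod>w\<in>K e. g e (cpt e w x0 x1)) * (\<Prod>e\<in>{e\<in>H. \<not> j \<notin> e}. \<Prod>w\<in>K e. g e (cpt e w x0 x1))"
        unfolding Pr_def by (rule prod_split[OF hf(5)])
      also have "(\<Prod>e\<in>{e\<in>H. \<not> j \<notin> e}. \<Prod>w\<in>K e. g e (cpt e w x0 x1)) = 1"
        unfolding K_def by (intro prod.neutral) auto
      also have "(\<Prod>e\<in>{e\<in>H. j \<notin> e}. \<Prod>w\<in>K e. g e (cpt e w x0 x1)) = Pr {e\<in>H. j \<notin> e} (Om S) g x0 x1"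
        unfolding Pr_def K_def by (intro prod.cong refl) auto
      finally show ?thesis by simp
    qed
    have Ksub: "\<forall>e\<in>H. K e \<subseteq> cube e" using Om_sub unfolding K_def by auto
    have eqW: "aW = (\<lambda>N. avg (Vprod (V N) J \<times> Vprod (V N) J) (\<lambda>(x0, x1). Pr H K (\<nu> N) x0 x1))"
      by (rule ext) (simp add: aW_def PrK)
    have aW: "aW \<longlonglongrightarrow> 1"
      unfolding eqW by (rule ii_K[OF pr hf(6) Ksub])
    have aW0: "0 \<le> aW N" for N
      unfolding aW_def
    proof (rule avg_nonneg)
      fix p assume "p \<in> Vprod (V N) J \<times> Vprod (V N) J"
      then obtain x0 x1 where p: "p = (x0, x1)" "x0 \<in> PiE J (V N)" "x1 \<in> PiE J (V N)"
        unfolding Vprod_def by blast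
      have "0 \<le> Pr {e\<in>H. j \<notin> e} (Om S) (\<nu> N) x0 x1"
        by (rule Pr_nonneg[OF pr _ _ p(2,3)]) (use hf(4) in auto)
      then show "0 \<le> (case p of (x0, x1) \<Rightarrow> Pr {e\<in>H. j \<notin> e} (Om S) (\<nu> N) x0 x1)"
        using p by simp
    qed
    define c' where "c' N = (c N)^2 * aW N" for N
    have "c' \<longlonglongrightarrow> 1 ^ 2 * 1" unfolding c'_def by (intro tendsto_intros c aW)
    then have c'1: "c' \<longlonglongrightarrow> 1" by simp
    have c'0: "\<forall>N. 0 \<le> c' N" unfolding c'_def using aW0 by simp
    show ?case
    proof (intro exI[of _ c'] conjI c'1 c'0 allI impI)
      fix N f assume fb: "\<forall>e\<in>H. \<forall>x\<in>Vprod (V N) e. \<bar>f e x\<bar> \<le> \<nu> N e x"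
      let ?X = "Vprod (V N) J"
      let ?a = "\<bar>avg ?X (\<lambda>x. \<Prod>e'\<in>H. f e' (proj e' x))\<bar>"
      define m where "m = (real (card ?X))^2"
      have m: "0 < m" using cardpos unfolding m_def by simp
      define s0 where "s0 = (\<Sum>x0\<in>?X. \<Sum>x1\<in>?X. PP H S f (\<nu> N) x0 x1)"
      define s1 where "s1 = (\<Sum>x0\<in>?X. \<Sum>x1\<in>?X. PP H (insert j S) f (\<nu> N) x0 x1)"
      define sw where "sw = (\<Sum>x0\<in>?X. \<Sum>x1\<in>?X. Pr {e\<in>H. j \<notin> e} (Om S) (\<nu> N) x0 x1)"
      have fb': "\<forall>e\<in>H. \<forall>y\<in>PiE e (V N). \<bar>f e y\<bar> \<le> \<nu> N e y" using fb by (simp add: Vprod_def)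
      note SP = step_PP[where j=j and S=S and f=f and \<nu>="\<nu> N" and V="V N", OF hf(1,2,3,4,5) insert(2,3) fb']
      have XV: "?X = PiE J (V N)" by (simp add: Vprod_def)
      have st: "s0^2 \<le> sw * s1" "0 \<le> s1"
        unfolding s0_def s1_def sw_def XV by (rule SP(1), rule SP(2))
      have A0: "avg (?X \<times> ?X) (\<lambda>(x0, x1). PP H S f (\<nu> N) x0 x1) = s0 / m"
        unfolding avg_pair s0_def m_def ..
      have A1: "avg (?X \<times> ?X) (\<lambda>(x0, x1). PP H (insert j S) f (\<nu> N) x0 x1) = s1 / m"
        unfolding avg_pair s1_def m_def ..
      have AW: "aW N = sw / m" unfolding aW_def avg_pair sw_def m_def ..
      have "?a ^ (2 ^ card S) \<le> c N * \<bar>avg (?X \<times> ?X) (\<lambda>(x0, x1). PP H S f (\<nu> N) x0 x1)\<bar>"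
        using cb fb by blast
      then have ih: "?a ^ (2 ^ card S) \<le> c N * \<bar>s0 / m\<bar>" unfolding A0 .
      have "?a ^ (2 ^ card (insert j S)) = (?a ^ (2 ^ card S))^2"
        using insert(1,3) by (simp add: power_mult[symmetric] mult.commute)
      also have "\<dots> \<le> (c N * \<bar>s0 / m\<bar>)^2"
        using ih by (intro power_mono) auto
      also have "\<dots> = (c N)^2 * (s0^2 / m^2)" by (simp add: power_mult_distrib power_divide)
      also have "\<dots> \<le> (c N)^2 * ((sw * s1) / m^2)"
        using st m by (intro mult_left_mono divide_right_mono) auto
      also have "\<dots> = c' N * \<bar>s1 / m\<bar>"
        unfolding c'_def AW using st(2) m by (simp add: power2_eq_square)
      finally show "?a ^ (2 ^ card (insert j S))
          \<le> c' N * \<bar>avg (?X \<times> ?X) (\<lambda>(x0, x1). PP H (insert j S) f (\<nu> N) x0 x1)\<bar>"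
        unfolding A1 .
    qed
  qed
qed

definition fl :: "'j set \<Rightarrow> 'j set \<Rightarrow> ('j \<Rightarrow> bool) \<Rightarrow> ('j \<Rightarrow> bool)" where
  "fl T e w = restrict (\<lambda>i. w i \<or> i \<in> T) e"

definition Kp :: "'j set \<Rightarrow> 'j set \<Rightarrow> ('j \<Rightarrow> bool) set" where
  "Kp e0 e = (if e = e0 then cube e0 else {})"
definition Kw :: "'j set \<Rightarrow> 'j set \<Rightarrow> ('j \<Rightarrow> bool) set" where
  "Kw e0 e = (if e = e0 then {} else Om e0 e)"
definition Kv :: "'j set \<Rightarrow> 'j set \<Rightarrow> 'j set \<Rightarrow> ('j \<Rightarrow> bool) set" where
  "Kv e0 T e = (if e = e0 then {} else fl T e ` Om e0 e)"

lemma fl_cpt: "cpt e (fl T e w) x0 x1 = cpt e w (ovr T x0 x1) x1"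
  unfolding cpt_def fl_def ovr_def by (auto intro!: restrict_ext)

lemma fl_cube: "fl T e w \<in> cube e"
  unfolding fl_def cube_def by auto

lemma fl_inj:
  assumes "T \<inter> e0 = {}"
  shows "inj_on (fl T e) (Om e0 e)"
proof (rule inj_onI)
  fix a b assume a: "a \<in> Om e0 e" and b: "b \<in> Om e0 e" and eq: "fl T e a = fl T e b"
  show "a = b"
  proof (rule ext)
    fix i
    show "a i = b i"
    proof (cases "i \<in> e")
      case True
      have "fl T e a i = fl T e b i" using eq by simp
      then have 1: "(a i \<or> i \<in> T) = (b i \<or> i \<in> T)" using True unfolding fl_def by simp
      show ?thesis
      proof (cases "i \<in> T")
        case True
        then have "i \<notin> e0" using assms by blast
        then show ?thesis using a b \<open>i \<in> e\<close> unfolding Om_def by auto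
      next
        case False
        then show ?thesis using 1 by simp
      qed
    next
      case False
      then show ?thesis using a b unfolding Om_def cube_def by (auto simp: PiE_iff extensional_def)
    qed
  qed
qed

lemma Om_fl_disj:
  assumes "i \<in> e" "i \<in> T" "T \<inter> e0 = {}"
  shows "Om e0 e \<inter> fl T e ` Om e0 e = {}"
proof -
  have "a i = False" if "a \<in> Om e0 e" for a using that assms unfolding Om_def by auto
  moreover have "fl T e w i = True" for w using assms unfolding fl_def by simp
  ultimately show ?thesis by (metis (full_types) disjoint_iff imageE)
qed

lemma Pr_union:
  assumes "finite H" "\<forall>e\<in>H. finite (K1 e) \<and> finite (K2 e) \<and> K1 e \<inter> K2 e = {}"
  shows "Pr H (\<lambda>e. K1 e \<union> K2 e) g x0 x1 = Pr H K1 g x0 x1 * Pr H K2 g x0 x1"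
  unfolding Pr_def prod.distrib[symmetric]
  using assms by (intro prod.cong refl prod.union_disjoint) auto

lemma Pr_inv0:
  assumes "\<forall>e\<in>H. K e \<noteq> {} \<longrightarrow> T \<inter> e = {}"
  shows "Pr H K g (ovr T x0 z) x1 = Pr H K g x0 x1"
  unfolding Pr_def
proof (rule prod.cong[OF refl])
  fix e assume e: "e \<in> H"
  show "(\<Prod>w\<in>K e. g e (cpt e w (ovr T x0 z) x1)) = (\<Prod>w\<in>K e. g e (cpt e w x0 x1))"
  proof (cases "K e = {}")
    case False
    then have "T \<inter> e = {}" using assms e by blast
    then show ?thesis by (simp add: cpt_ovr0)
  qed simp
qed

lemma Pr_inv1:
  assumes "\<forall>e\<in>H. \<forall>w\<in>K e. \<forall>i\<in>e. w i \<longrightarrow> i \<notin> T"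
  shows "Pr H K g x0 (ovr T x1 z) = Pr H K g x0 x1"
  unfolding Pr_def using assms by (intro prod.cong refl) (simp add: cpt_ovr1)

lemma other_edge:
  assumes "finite e" "card e = card e0" "e \<noteq> e0" "finite e0"
  shows "\<exists>i\<in>e. i \<notin> e0"
proof (rule ccontr)
  assume "\<not> ?thesis"
  then have "e \<subseteq> e0" by blast
  then have "e = e0" using assms card_subset_eq by blast
  then show False using assms by simp
qed

lemma Om_self: "Om e e = cube e"
  unfolding Om_def cube_def by auto

lemma final_step:
  fixes f \<nu> :: "'j set \<Rightarrow> ('j \<Rightarrow> 'v) \<Rightarrow> real"
  assumes fin: "finite J" "\<forall>i\<in>J. finite (V i)" and ne: "\<forall>i\<in>J. V i \<noteq> {}"
    and HJ: "\<forall>e\<in>H. e \<subseteq> J" and finH: "finite H" and e0: "e0 \<in> H"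
    and cardH: "\<forall>e\<in>H. card e = card e0"
    and fb: "\<forall>e\<in>H. \<forall>y\<in>PiE e V. \<bar>f e y\<bar> \<le> \<nu> e y"
  shows "((\<Sum>x0\<in>PiE J V. \<Sum>x1\<in>PiE J V. PP H e0 f \<nu> x0 x1) - (\<Sum>x0\<in>PiE J V. \<Sum>x1\<in>PiE J V. Pr H (Kp e0) f x0 x1))^2
      \<le> (\<Sum>x0\<in>PiE J V. \<Sum>x1\<in>PiE J V. Pr H (Kp e0) \<nu> x0 x1) *
         (\<Sum>x0\<in>PiE J V. \<Sum>x1\<in>PiE J V. Pr H (Kp e0) \<nu> x0 x1 * (Pr H (Kw e0) \<nu> x0 x1 - 1) * (Pr H (Kv e0 (J - e0)) \<nu> x0 x1 - 1))"
    and "0 \<le> (\<Sum>x0\<in>PiE J V. \<Sum>x1\<in>PiE J V. Pr H (Kp e0) \<nu> x0 x1 * (Pr H (Kw e0) \<nu> x0 x1 - 1) * (Pr H (Kv e0 (J - e0)) \<nu> x0 x1 - 1))"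
proof -
  define T where "T = J - e0"
  have TJ: "T \<subseteq> J" unfolding T_def by auto
  have Te0: "T \<inter> e0 = {}" unfolding T_def by auto
  have fine: "\<And>e. e \<in> H \<Longrightarrow> finite e" using HJ fin(1) finite_subset by blast
  have nsub: "\<not> e0 \<subseteq> e" if "e \<in> H" "e \<noteq> e0" for e
    using card_subset_eq[OF fine[OF that(1)]] cardH that by metis
  have PPdec: "PP H e0 f \<nu> x0 x1 = Pr H (Kp e0) f x0 x1 * Pr H (Kw e0) \<nu> x0 x1" for x0 x1
    unfolding PP_def Pr_def prod.distrib[symmetric]
  proof (rule prod.cong[OF refl])
    fix e assume e: "e \<in> H"
    show "(\<Prod>w\<in>Om e0 e. GG e0 f \<nu> e (cpt e w x0 x1))
        = (\<Prod>w\<in>Kp e0 e. f e (cpt e w x0 x1)) * (\<Prod>w\<in>Kw e0 e. \<nu> e (cpt e w x0 x1))"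
    proof (cases "e = e0")
      case True
      then show ?thesis by (simp add: Om_self Kp_def Kw_def GG_def)
    next
      case False
      then show ?thesis using nsub[OF e False] by (simp add: Kp_def Kw_def GG_def)
    qed
  qed
  have W'eq: "Pr H (Kw e0) \<nu> (ovr T x0 x1) x1 = Pr H (Kv e0 T) \<nu> x0 x1" for x0 x1
    unfolding Pr_def
  proof (rule prod.cong[OF refl])
    fix e assume e: "e \<in> H"
    show "(\<Prod>w\<in>Kw e0 e. \<nu> e (cpt e w (ovr T x0 x1) x1)) = (\<Prod>w\<in>Kv e0 T e. \<nu> e (cpt e w x0 x1))"
    proof (cases "e = e0")
      case False
      have "(\<Prod>w\<in>fl T e ` Om e0 e. \<nu> e (cpt e w x0 x1)) = (\<Prod>w\<in>Om e0 e. \<nu> e (cpt e (fl T e w) x0 x1))"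
        using prod.reindex[OF fl_inj[OF Te0, of e]] by simp
      then show ?thesis using False by (simp add: Kw_def Kv_def fl_cpt)
    qed (simp add: Kw_def Kv_def)
  qed
  define A where "A = Pr H (Kp e0) f"
  define W where "W = Pr H (Kp e0) \<nu>"
  define B where "B x0 x1 = Pr H (Kw e0) \<nu> x0 x1 - 1" for x0 x1
  have c0: "\<forall>e\<in>H. Kp e0 e \<noteq> {} \<longrightarrow> T \<inter> e = {}" using Te0 by (auto simp: Kp_def)
  have c1: "\<forall>e\<in>H. \<forall>w\<in>Kp e0 e. \<forall>i\<in>e. w i \<longrightarrow> i \<notin> T" using Te0 by (auto simp: Kp_def)
  have c2: "\<forall>e\<in>H. \<forall>w\<in>Kw e0 e. \<forall>i\<in>e. w i \<longrightarrow> i \<notin> T" by (auto simp: Kw_def Om_def T_def)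
  have iA: "A (ovr T x0 z) x1 = A x0 x1 \<and> A x0 (ovr T x1 z) = A x0 x1" for x0 x1 z
    unfolding A_def using Pr_inv0[OF c0] Pr_inv1[OF c1] by blast
  have iW: "W (ovr T x0 z) x1 = W x0 x1 \<and> W x0 (ovr T x1 z) = W x0 x1" for x0 x1 z
    unfolding W_def using Pr_inv0[OF c0] Pr_inv1[OF c1] by blast
  have iB: "B x0 (ovr T x1 z) = B x0 x1" for x0 x1 z
    unfolding B_def using Pr_inv1[OF c2] by simp
  have bnd: "\<bar>A x0 x1\<bar> \<le> W x0 x1" if "x0 \<in> PiE J V" "x1 \<in> PiE J V" for x0 x1
    unfolding A_def W_def by (rule Pr_bound) (use HJ that fb in auto)
  note cs = cs_step[OF fin ne TJ, of A W B]
  have r1: "(\<Sum>x0\<in>PiE J V. \<Sum>x1\<in>PiE J V. A x0 x1 * B x0 x1)^2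
      \<le> (\<Sum>x0\<in>PiE J V. \<Sum>x1\<in>PiE J V. W x0 x1) * (\<Sum>x0\<in>PiE J V. \<Sum>x1\<in>PiE J V. W x0 x1 * B x0 x1 * B (ovr T x0 x1) x1)"
    by (rule cs(1)) (simp_all add: iA iW iB bnd)
  have r2: "0 \<le> (\<Sum>x0\<in>PiE J V. \<Sum>x1\<in>PiE J V. W x0 x1 * B x0 x1 * B (ovr T x0 x1) x1)"
    by (rule cs(2)) (simp_all add: iA iW iB bnd)
  have AB: "(\<Sum>x0\<in>PiE J V. \<Sum>x1\<in>PiE J V. A x0 x1 * B x0 x1)
      = (\<Sum>x0\<in>PiE J V. \<Sum>x1\<in>PiE J V. PP H e0 f \<nu> x0 x1) - (\<Sum>x0\<in>PiE J V. \<Sum>x1\<in>PiE J V. Pr H (Kp e0) f x0 x1)"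
    unfolding A_def B_def PPdec by (simp add: sum_subtractf right_diff_distrib)
  have WBB: "W x0 x1 * B x0 x1 * B (ovr T x0 x1) x1
      = Pr H (Kp e0) \<nu> x0 x1 * (Pr H (Kw e0) \<nu> x0 x1 - 1) * (Pr H (Kv e0 (J - e0)) \<nu> x0 x1 - 1)" for x0 x1
    unfolding W_def B_def W'eq T_def[symmetric] ..
  have S2: "(\<Sum>x0\<in>PiE J V. \<Sum>x1\<in>PiE J V. W x0 x1 * B x0 x1 * B (ovr T x0 x1) x1)
      = (\<Sum>x0\<in>PiE J V. \<Sum>x1\<in>PiE J V. Pr H (Kp e0) \<nu> x0 x1 * (Pr H (Kw e0) \<nu> x0 x1 - 1) * (Pr H (Kv e0 (J - e0)) \<nu> x0 x1 - 1))"
    by (simp only: WBB)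
  have WW: "(\<Sum>x0\<in>PiE J V. \<Sum>x1\<in>PiE J V. W x0 x1) = (\<Sum>x0\<in>PiE J V. \<Sum>x1\<in>PiE J V. Pr H (Kp e0) \<nu> x0 x1)"
    by (simp only: W_def)
  show "((\<Sum>x0\<in>PiE J V. \<Sum>x1\<in>PiE J V. PP H e0 f \<nu> x0 x1) - (\<Sum>x0\<in>PiE J V. \<Sum>x1\<in>PiE J V. Pr H (Kp e0) f x0 x1))^2
      \<le> (\<Sum>x0\<in>PiE J V. \<Sum>x1\<in>PiE J V. Pr H (Kp e0) \<nu> x0 x1) *
         (\<Sum>x0\<in>PiE J V. \<Sum>x1\<in>PiE J V. Pr H (Kp e0) \<nu> x0 x1 * (Pr H (Kw e0) \<nu> x0 x1 - 1) * (Pr H (Kv e0 (J - e0)) \<nu> x0 x1 - 1))"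
    using r1 unfolding AB S2 WW .
  show "0 \<le> (\<Sum>x0\<in>PiE J V. \<Sum>x1\<in>PiE J V. Pr H (Kp e0) \<nu> x0 x1 * (Pr H (Kw e0) \<nu> x0 x1 - 1) * (Pr H (Kv e0 (J - e0)) \<nu> x0 x1 - 1))"
    using r2 unfolding S2 .
qed

lemma avg_lin4: "avg A (\<lambda>p. a p - b p - c p + d p) = avg A a - avg A b - avg A c + avg A d"
  unfolding avg_def by (simp add: sum.distrib sum_subtractf diff_divide_distrib add_divide_distrib)

lemma lim_D:
  assumes hs: "hypergraph_system J V d H" and pr: "pseudorandom J V H \<nu>" and e0: "e0 \<in> H"
  shows "(\<lambda>N. avg (Vprod (V N) J \<times> Vprod (V N) J) (\<lambda>(x0, x1). Pr H (Kp e0) (\<nu> N) x0 x1)) \<longlonglongrightarrow> 1"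
    and "(\<lambda>N. avg (Vprod (V N) J \<times> Vprod (V N) J) (\<lambda>(x0, x1). Pr H (Kp e0) (\<nu> N) x0 x1 *
            (Pr H (Kw e0) (\<nu> N) x0 x1 - 1) * (Pr H (Kv e0 (J - e0)) (\<nu> N) x0 x1 - 1))) \<longlonglongrightarrow> 0"
proof -
  note hf = hs_facts[OF hs]
  define T where "T = J - e0"
  have fc: "\<And>e. e \<in> H \<Longrightarrow> finite (cube e)" using hf(6) finite_cube by blast
  have sp: "\<forall>e\<in>H. Kp e0 e \<subseteq> cube e" by (auto simp: Kp_def)
  have sw: "\<forall>e\<in>H. Kw e0 e \<subseteq> cube e" using Om_sub by (auto simp: Kw_def)
  have sv: "\<forall>e\<in>H. Kv e0 T e \<subseteq> cube e" using fl_cube by (auto simp: Kv_def)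
  have fp: "\<forall>e\<in>H. finite (Kp e0 e)" using sp fc finite_subset by blast
  have fw: "\<forall>e\<in>H. finite (Kw e0 e)" using sw fc finite_subset by blast
  have fv: "\<forall>e\<in>H. finite (Kv e0 T e)" using sv fc finite_subset by blast
  have dpw: "\<forall>e\<in>H. Kp e0 e \<inter> Kw e0 e = {}" by (auto simp: Kp_def Kw_def)
  have dpv: "\<forall>e\<in>H. Kp e0 e \<inter> Kv e0 T e = {}" by (auto simp: Kp_def Kv_def)
  have dwv: "\<forall>e\<in>H. (Kp e0 e \<union> Kw e0 e) \<inter> Kv e0 T e = {}"
  proof
    fix e assume e: "e \<in> H"
    show "(Kp e0 e \<union> Kw e0 e) \<inter> Kv e0 T e = {}"
    proof (cases "e = e0")
      case False
      obtain i where i: "i \<in> e" "i \<notin> e0"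
        using other_edge[of e e0] hf(6,7) e e0 False by metis
      have "i \<in> T" using i e hf(4) unfolding T_def by auto
      moreover have "T \<inter> e0 = {}" unfolding T_def by auto
      ultimately have "Om e0 e \<inter> fl T e ` Om e0 e = {}" by (rule Om_fl_disj[OF i(1)])
      then show ?thesis using False by (simp add: Kp_def Kw_def Kv_def)
    qed (simp add: Kv_def)
  qed
  define P where "P N = Pr H (Kp e0) (\<nu> N)" for N
  define W where "W N = Pr H (Kw e0) (\<nu> N)" for N
  define U where "U N = Pr H (Kv e0 T) (\<nu> N)" for N
  have PW: "P N x0 x1 * W N x0 x1 = Pr H (\<lambda>e. Kp e0 e \<union> Kw e0 e) (\<nu> N) x0 x1" for N x0 x1
    unfolding P_def W_def using Pr_union[OF hf(5), of "Kp e0" "Kw e0" "\<nu> N" x0 x1] fp fw dpw by simp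
  have PU: "P N x0 x1 * U N x0 x1 = Pr H (\<lambda>e. Kp e0 e \<union> Kv e0 T e) (\<nu> N) x0 x1" for N x0 x1
    unfolding P_def U_def using Pr_union[OF hf(5), of "Kp e0" "Kv e0 T" "\<nu> N" x0 x1] fp fv dpv by simp
  have PWU: "P N x0 x1 * W N x0 x1 * U N x0 x1 = Pr H (\<lambda>e. (Kp e0 e \<union> Kw e0 e) \<union> Kv e0 T e) (\<nu> N) x0 x1" for N x0 x1
  proof -
    have "Pr H (\<lambda>e. (Kp e0 e \<union> Kw e0 e) \<union> Kv e0 T e) (\<nu> N) x0 x1
        = Pr H (\<lambda>e. Kp e0 e \<union> Kw e0 e) (\<nu> N) x0 x1 * Pr H (Kv e0 T) (\<nu> N) x0 x1"
      using Pr_union[OF hf(5), of "\<lambda>e. Kp e0 e \<union> Kw e0 e" "Kv e0 T" "\<nu> N" x0 x1] fp fw fv dwv by simp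
    then show ?thesis unfolding PW[symmetric] U_def by simp
  qed
  have l1: "(\<lambda>N. avg (Vprod (V N) J \<times> Vprod (V N) J) (\<lambda>(x0, x1). Pr H (Kp e0) (\<nu> N) x0 x1)) \<longlonglongrightarrow> 1"
    by (rule ii_K[OF pr hf(6) sp])
  have l2: "(\<lambda>N. avg (Vprod (V N) J \<times> Vprod (V N) J) (\<lambda>(x0, x1). Pr H (\<lambda>e. Kp e0 e \<union> Kw e0 e) (\<nu> N) x0 x1)) \<longlonglongrightarrow> 1"
    by (rule ii_K[OF pr hf(6)]) (use sp sw in auto)
  have l3: "(\<lambda>N. avg (Vprod (V N) J \<times> Vprod (V N) J) (\<lambda>(x0, x1). Pr H (\<lambda>e. Kp e0 e \<union> Kv e0 T e) (\<nu> N) x0 x1)) \<longlonglongrightarrow> 1"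
    by (rule ii_K[OF pr hf(6)]) (use sp sv in auto)
  have l4: "(\<lambda>N. avg (Vprod (V N) J \<times> Vprod (V N) J) (\<lambda>(x0, x1). Pr H (\<lambda>e. (Kp e0 e \<union> Kw e0 e) \<union> Kv e0 T e) (\<nu> N) x0 x1)) \<longlonglongrightarrow> 1"
    by (rule ii_K[OF pr hf(6)]) (use sp sw sv in auto)
  have eq: "avg (Vprod (V N) J \<times> Vprod (V N) J) (\<lambda>(x0, x1). P N x0 x1 * (W N x0 x1 - 1) * (U N x0 x1 - 1))
     = avg (Vprod (V N) J \<times> Vprod (V N) J) (\<lambda>(x0, x1). Pr H (\<lambda>e. (Kp e0 e \<union> Kw e0 e) \<union> Kv e0 T e) (\<nu> N) x0 x1)
     - avg (Vprod (V N) J \<times> Vprod (V N) J) (\<lambda>(x0, x1). Pr H (\<lambda>e. Kp e0 e \<union> Kw e0 e) (\<nu> N) x0 x1)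
     - avg (Vprod (V N) J \<times> Vprod (V N) J) (\<lambda>(x0, x1). Pr H (\<lambda>e. Kp e0 e \<union> Kv e0 T e) (\<nu> N) x0 x1)
     + avg (Vprod (V N) J \<times> Vprod (V N) J) (\<lambda>(x0, x1). Pr H (Kp e0) (\<nu> N) x0 x1)" for N
  proof -
    have "(\<lambda>(x0, x1). P N x0 x1 * (W N x0 x1 - 1) * (U N x0 x1 - 1))
      = (\<lambda>p. (\<lambda>(x0, x1). Pr H (\<lambda>e. (Kp e0 e \<union> Kw e0 e) \<union> Kv e0 T e) (\<nu> N) x0 x1) p
           - (\<lambda>(x0, x1). Pr H (\<lambda>e. Kp e0 e \<union> Kw e0 e) (\<nu> N) x0 x1) p
           - (\<lambda>(x0, x1). Pr H (\<lambda>e. Kp e0 e \<union> Kv e0 T e) (\<nu> N) x0 x1) p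
           + (\<lambda>(x0, x1). Pr H (Kp e0) (\<nu> N) x0 x1) p)"
    proof (rule ext)
      fix p :: "('a \<Rightarrow> 'b) \<times> ('a \<Rightarrow> 'b)"
      obtain x0 x1 where p: "p = (x0, x1)" by (cases p)
      show "(case p of (x0, x1) \<Rightarrow> P N x0 x1 * (W N x0 x1 - 1) * (U N x0 x1 - 1)) =
         (case p of (x0, x1) \<Rightarrow> Pr H (\<lambda>e. (Kp e0 e \<union> Kw e0 e) \<union> Kv e0 T e) (\<nu> N) x0 x1)
         - (case p of (x0, x1) \<Rightarrow> Pr H (\<lambda>e. Kp e0 e \<union> Kw e0 e) (\<nu> N) x0 x1)
         - (case p of (x0, x1) \<Rightarrow> Pr H (\<lambda>e. Kp e0 e \<union> Kv e0 T e) (\<nu> N) x0 x1)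
         + (case p of (x0, x1) \<Rightarrow> Pr H (Kp e0) (\<nu> N) x0 x1)"
        unfolding p PWU[symmetric] PW[symmetric] PU[symmetric] by (simp add: P_def algebra_simps)
    qed
    then show ?thesis by (simp only: avg_lin4)
  qed
  show "(\<lambda>N. avg (Vprod (V N) J \<times> Vprod (V N) J) (\<lambda>(x0, x1). Pr H (Kp e0) (\<nu> N) x0 x1)) \<longlonglongrightarrow> 1"
    by (rule l1)
  have "(\<lambda>N. avg (Vprod (V N) J \<times> Vprod (V N) J) (\<lambda>(x0, x1). P N x0 x1 * (W N x0 x1 - 1) * (U N x0 x1 - 1))) \<longlonglongrightarrow> 1 - 1 - 1 + 1"
    unfolding eq by (intro tendsto_intros l1 l2 l3 l4)
  then show "(\<lambda>N. avg (Vprod (V N) J \<times> Vprod (V N) J) (\<lambda>(x0, x1). Pr H (Kp e0) (\<nu> N) x0 x1 *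
            (Pr H (Kw e0) (\<nu> N) x0 x1 - 1) * (Pr H (Kv e0 (J - e0)) (\<nu> N) x0 x1 - 1))) \<longlonglongrightarrow> 0"
    unfolding P_def W_def U_def T_def by simp
qed

lemma marg1:
  fixes g :: "('j \<Rightarrow> 'v) \<Rightarrow> real"
  assumes eJ: "e \<subseteq> J"
  shows "(\<Sum>x\<in>PiE J V. g (restrict x e)) = real (card (PiE (J - e) V)) * (\<Sum>a\<in>PiE e V. g a)"
    and "card (PiE J V) = card (PiE e V) * card (PiE (J - e) V)"
proof -
  let ?X = "PiE J V" and ?Y = "PiE e V" and ?Z = "PiE (J - e) V"
  define ps where "ps = (\<lambda>(a::'j\<Rightarrow>'v, b::'j\<Rightarrow>'v). (\<lambda>i. if i \<in> e then a i else b i))"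
  define ch where "ch = (\<lambda>x::'j\<Rightarrow>'v. (restrict x e, restrict x (J - e)))"
  have bij: "bij_betw ps (?Y \<times> ?Z) ?X"
  proof (rule bij_betw_byWitness[where f'=ch])
    show "\<forall>p\<in>?Y \<times> ?Z. ch (ps p) = p"
    proof
      fix p assume "p \<in> ?Y \<times> ?Z"
      then obtain a b where p: "p = (a, b)" "a \<in> ?Y" "b \<in> ?Z" by (cases p) auto
      have "restrict (\<lambda>i. if i \<in> e then a i else b i) e = a"
        using p(2) by (auto simp: PiE_iff extensional_def fun_eq_iff)
      moreover have "restrict (\<lambda>i. if i \<in> e then a i else b i) (J - e) = b"
        using p(3) by (auto simp: PiE_iff extensional_def fun_eq_iff)
      ultimately show "ch (ps p) = p" using p(1) by (simp add: ch_def ps_def)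
    qed
    show "\<forall>x\<in>?X. ps (ch x) = x"
    proof
      fix x assume "x \<in> ?X"
      then show "ps (ch x) = x" using eJ by (auto simp: ch_def ps_def PiE_iff extensional_def fun_eq_iff)
    qed
    show "ps ` (?Y \<times> ?Z) \<subseteq> ?X"
      using eJ by (auto simp: ps_def PiE_iff extensional_def)
    show "ch ` ?X \<subseteq> ?Y \<times> ?Z"
      using eJ by (auto simp: ch_def PiE_iff)
  qed
  have "(\<Sum>x\<in>?X. g (restrict x e)) = (\<Sum>p\<in>?Y \<times> ?Z. g (restrict (ps p) e))"
    by (rule sum.reindex_bij_betw[OF bij, symmetric])
  also have "\<dots> = (\<Sum>p\<in>?Y \<times> ?Z. g (fst p))"
  proof (rule sum.cong[OF refl])
    fix p assume "p \<in> ?Y \<times> ?Z"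
    then obtain a b where p: "p = (a, b)" "a \<in> ?Y" by (cases p) auto
    have "restrict (\<lambda>i. if i \<in> e then a i else b i) e = a"
      using p(2) by (auto simp: PiE_iff extensional_def fun_eq_iff)
    then show "g (restrict (ps p) e) = g (fst p)" using p by (simp add: ps_def)
  qed
  also have "\<dots> = (\<Sum>a\<in>?Y. \<Sum>b\<in>?Z. g a)"
    by (subst sum.cartesian_product) (simp add: case_prod_beta)
  also have "\<dots> = real (card ?Z) * (\<Sum>a\<in>?Y. g a)"
    by (simp add: sum_distrib_left sum_distrib_right mult.commute)
  finally show "(\<Sum>x\<in>?X. g (restrict x e)) = real (card ?Z) * (\<Sum>a\<in>?Y. g a)" .
  show "card ?X = card ?Y * card ?Z"
    using bij_betw_same_card[OF bij] by (simp add: card_cartesian_product)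
qed

lemma marg2:
  fixes h :: "('j \<Rightarrow> 'v) \<Rightarrow> ('j \<Rightarrow> 'v) \<Rightarrow> real"
  assumes eJ: "e \<subseteq> J" and fin: "finite J" "\<forall>i\<in>J. finite (V i)" and ne: "\<forall>i\<in>J. V i \<noteq> {}"
  shows "avg (PiE J V \<times> PiE J V) (\<lambda>(x0, x1). h (restrict x0 e) (restrict x1 e))
       = avg (PiE e V \<times> PiE e V) (\<lambda>(a, b). h a b)"
proof -
  let ?X = "PiE J V" and ?Y = "PiE e V" and ?Z = "PiE (J - e) V"
  define c where "c = real (card ?Z)"
  have cpos: "c > 0"
  proof -
    have "finite ?Z" using fin by (intro finite_PiE) auto
    moreover have "?Z \<noteq> {}" using ne by (simp add: PiE_eq_empty_iff)
    ultimately show ?thesis unfolding c_def by (simp add: card_gt_0_iff)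
  qed
  have cX: "real (card ?X) = real (card ?Y) * c" unfolding c_def marg1(2)[OF eJ] by simp
  have "(\<Sum>x0\<in>?X. \<Sum>x1\<in>?X. h (restrict x0 e) (restrict x1 e)) = (\<Sum>x0\<in>?X. c * (\<Sum>b\<in>?Y. h (restrict x0 e) b))"
    unfolding c_def by (intro sum.cong refl marg1(1)[OF eJ])
  also have "\<dots> = c * (\<Sum>x0\<in>?X. \<Sum>b\<in>?Y. h (restrict x0 e) b)"
    by (simp add: sum_distrib_left)
  also have "\<dots> = c * (\<Sum>b\<in>?Y. \<Sum>x0\<in>?X. h (restrict x0 e) b)"
    by (subst sum.swap) (rule refl)
  also have "\<dots> = c * (\<Sum>b\<in>?Y. c * (\<Sum>a\<in>?Y. h a b))"
    unfolding c_def by (intro arg_cong2[where f="(*)"] refl sum.cong marg1(1)[OF eJ])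
  also have "\<dots> = c^2 * (\<Sum>a\<in>?Y. \<Sum>b\<in>?Y. h a b)"
  proof -
    have "c * (\<Sum>b\<in>?Y. c * (\<Sum>a\<in>?Y. h a b)) = c^2 * (\<Sum>b\<in>?Y. \<Sum>a\<in>?Y. h a b)"
      by (simp add: sum_distrib_left power2_eq_square mult.assoc)
    also have "\<dots> = c^2 * (\<Sum>a\<in>?Y. \<Sum>b\<in>?Y. h a b)"
      by (subst sum.swap) (rule refl)
    finally show ?thesis .
  qed
  finally have "(\<Sum>x0\<in>?X. \<Sum>x1\<in>?X. h (restrict x0 e) (restrict x1 e)) = c^2 * (\<Sum>a\<in>?Y. \<Sum>b\<in>?Y. h a b)" .
  then show ?thesis unfolding avg_pair cX using cpos by (simp add: power_mult_distrib)
qed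

lemma phi_nonneg:
  fixes g :: "('j \<Rightarrow> 'v) \<Rightarrow> real"
  assumes fin: "finite J" "\<forall>i\<in>J. finite (V i)" and ne: "\<forall>i\<in>J. V i \<noteq> {}"
    and e0J: "e0 \<subseteq> J" and e0ne: "e0 \<noteq> {}"
  shows "0 \<le> (\<Sum>x0\<in>PiE J V. \<Sum>x1\<in>PiE J V. \<Prod>w\<in>cube e0. g (cpt e0 w x0 x1))"
proof -
  obtain j where j: "j \<in> e0" using e0ne by blast
  have ins: "insert j (e0 - {j}) = e0" using j by auto
  have "0 \<le> (\<Sum>x0\<in>PiE J V. \<Sum>x1\<in>PiE J V. PP {e0} (insert j (e0 - {j})) (\<lambda>_. g) (\<lambda>_ y. \<bar>g y\<bar>) x0 x1)"
    by (rule step_PP(2)[OF fin ne]) (use e0J j in auto)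
  moreover have "PP {e0} e0 (\<lambda>_. g) (\<lambda>_ y. \<bar>g y\<bar>) x0 x1 = (\<Prod>w\<in>cube e0. g (cpt e0 w x0 x1))" for x0 x1
    unfolding PP_def Pr_def GG_def by (simp add: Om_self)
  ultimately show ?thesis unfolding ins by simp
qed

lemma Pr_Kp: "e0 \<in> H \<Longrightarrow> finite H \<Longrightarrow> Pr H (Kp e0) g x0 x1 = (\<Prod>w\<in>cube e0. g e0 (cpt e0 w x0 x1))"
  unfolding Pr_def Kp_def by (simp add: prod.remove[of H e0] prod.neutral)

lemma cpt_restrict: "cpt e w x0 x1 = cpt e w (restrict x0 e) (restrict x1 e)"
  unfolding cpt_def by auto

lemma pow_sum_ge: "0 \<le> x \<Longrightarrow> 0 \<le> y \<Longrightarrow> x ^ Suc m + y ^ Suc m \<le> ((x::real) + y) ^ Suc m"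
proof -
  assume x: "0 \<le> x" and y: "0 \<le> y"
  have 1: "x ^ m \<le> (x + y) ^ m" using x y by (intro power_mono) auto
  have 2: "y ^ m \<le> (x + y) ^ m" using x y by (intro power_mono) auto
  have "x ^ Suc m + y ^ Suc m = x * x ^ m + y * y ^ m" by simp
  also have "\<dots> \<le> x * (x + y) ^ m + y * (x + y) ^ m"
    using 1 2 x y by (intro add_mono mult_left_mono) auto
  also have "\<dots> = (x + y) ^ Suc m" by (simp add: algebra_simps)
  finally show ?thesis .
qed

lemma root_add_le:
  assumes k: "0 < k" and a: "0 \<le> a" and b: "0 \<le> b"
  shows "root k (a + b) \<le> root k a + root k b"
proof -
  obtain m where m: "k = Suc m" using k by (cases k) auto
  have xa: "root k a ^ k = a" using k a by simp
  have yb: "root k b ^ k = b" using k b by simp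
  have xs: "root k a ^ k + root k b ^ k \<le> (root k a + root k b) ^ k"
    using pow_sum_ge[OF real_root_ge_zero[OF a, where n=k] real_root_ge_zero[OF b, where n=k], where m=m] unfolding m[symmetric] .
  have "a + b \<le> (root k a + root k b) ^ k"
    using xs unfolding xa yb .
  then have "root k (a + b) \<le> root k ((root k a + root k b) ^ k)" by (rule real_root_le_mono[OF k])
  also have "\<dots> = root k a + root k b"
    by (rule real_root_power_cancel[OF k]) (intro add_nonneg_nonneg real_root_ge_zero a b)
  finally show ?thesis .
qed

lemma avgF_bound:
  assumes hs: "hypergraph_system J V d H"
    and fb: "\<forall>e\<in>H. \<forall>x\<in>Vprod (V N) e. \<bar>f e x\<bar> \<le> \<nu> N e x"
  shows "\<bar>avg (Vprod (V N) J) (\<lambda>x. \<Prod>e'\<in>H. f e' (proj e' x))\<bar> \<le> avg (Vprod (V N) J) (\<lambda>x. \<Prod>e'\<in>H. \<nu> N e' (proj e' x))"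
proof -
  note hf = hs_facts[OF hs]
  have pin: "proj e x \<in> Vprod (V N) e" if "x \<in> Vprod (V N) J" "e \<in> H" for x e
    using that hf(4) unfolding proj_def Vprod_def by (auto simp: PiE_iff)
  have pw: "\<bar>\<Prod>e'\<in>H. f e' (proj e' x)\<bar> \<le> (\<Prod>e'\<in>H. \<nu> N e' (proj e' x))" if x: "x \<in> Vprod (V N) J" for x
    unfolding abs_prod
  proof (rule prod_mono)
    fix e assume e: "e \<in> H"
    have "\<bar>f e (proj e x)\<bar> \<le> \<nu> N e (proj e x)" using fb pin[OF x e] e by blast
    then show "0 \<le> \<bar>f e (proj e x)\<bar> \<and> \<bar>f e (proj e x)\<bar> \<le> \<nu> N e (proj e x)" by simp
  qed
  have sb: "(\<Sum>x\<in>Vprod (V N) J. \<bar>\<Prod>e'\<in>H. f e' (proj e' x)\<bar>) \<le> (\<Sum>x\<in>Vprod (V N) J. \<Prod>e'\<in>H. \<nu> N e' (proj e' x))"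
    by (rule sum_mono) (rule pw)
  have "\<bar>\<Sum>x\<in>Vprod (V N) J. \<Prod>e'\<in>H. f e' (proj e' x)\<bar> \<le> (\<Sum>x\<in>Vprod (V N) J. \<Prod>e'\<in>H. \<nu> N e' (proj e' x))"
    by (rule order_trans[OF sum_abs sb])
  from divide_right_mono[OF this, of "real (card (Vprod (V N) J))"]
  show ?thesis unfolding avg_def abs_divide by simp
qed

lemma per_edge:
  assumes hs: "hypergraph_system J V d H" and pr: "pseudorandom J V H \<nu>" and e0: "e0 \<in> H"
  shows "\<exists>\<epsilon>::nat \<Rightarrow> real. \<epsilon> \<longlonglongrightarrow> 0 \<and> (\<forall>N. 0 \<le> \<epsilon> N) \<and>
    (\<forall>N f. (\<forall>e\<in>H. \<forall>x\<in>Vprod (V N) e. \<bar>f e x\<bar> \<le> \<nu> N e x) \<longrightarrow>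
       \<bar>avg (Vprod (V N) J) (\<lambda>x. \<Prod>e'\<in>H. f e' (proj e' x))\<bar> \<le> 2 * cube_norm (V N) e0 (f e0) + \<epsilon> N)"
proof -
  note hf = hs_facts[OF hs]
  have e0J: "e0 \<subseteq> J" using hf(4) e0 by blast
  have e0ne: "e0 \<noteq> {}" using hf(7) hf(8) e0 by auto
  have cardH: "\<forall>e\<in>H. card e = card e0" using hf(7) e0 by auto
  define k where "k = (2::nat) ^ card e0"
  have k: "0 < k" unfolding k_def by simp
  obtain c where c: "c \<longlonglongrightarrow> 1" "\<forall>N. 0 \<le> c N"
    and cb: "\<forall>N f. (\<forall>e\<in>H. \<forall>x\<in>Vprod (V N) e. \<bar>f e x\<bar> \<le> \<nu> N e x) \<longrightarrow>
     \<bar>avg (Vprod (V N) J) (\<lambda>x. \<Prod>e'\<in>H. f e' (proj e' x))\<bar> ^ (2 ^ card e0)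
       \<le> c N * \<bar>avg (Vprod (V N) J \<times> Vprod (V N) J) (\<lambda>(x0, x1). PP H e0 f (\<nu> N) x0 x1)\<bar>"
    using claim[OF hs pr e0J] by blast
  define aP where "aP = (\<lambda>N. avg (Vprod (V N) J \<times> Vprod (V N) J) (\<lambda>(x0, x1). Pr H (Kp e0) (\<nu> N) x0 x1))"
  define aD where "aD = (\<lambda>N. avg (Vprod (V N) J \<times> Vprod (V N) J) (\<lambda>(x0, x1). Pr H (Kp e0) (\<nu> N) x0 x1 *
            (Pr H (Kw e0) (\<nu> N) x0 x1 - 1) * (Pr H (Kv e0 (J - e0)) (\<nu> N) x0 x1 - 1)))"
  have aPl: "aP \<longlonglongrightarrow> 1" unfolding aP_def by (rule lim_D(1)[OF hs pr e0])
  have aDl: "aD \<longlonglongrightarrow> 0" unfolding aD_def by (rule lim_D(2)[OF hs pr e0])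
  have XV: "Vprod (V N) J = PiE J (V N)" for N by (simp add: Vprod_def)
  have cardpos: "0 < card (Vprod (V N) J)" for N
  proof -
    have "finite (PiE J (V N))" using hf(1,2) by (intro finite_PiE) auto
    moreover have "PiE J (V N) \<noteq> {}" using hf(3) by (simp add: PiE_eq_empty_iff)
    ultimately show ?thesis unfolding Vprod_def by (simp add: card_gt_0_iff)
  qed
  have nufb: "\<forall>e\<in>H. \<forall>y\<in>PiE e (V N). \<bar>\<nu> N e y\<bar> \<le> \<nu> N e y" for N
    using nu_nonneg[OF pr] by auto
  have aD0: "0 \<le> aD N" for N
  proof -
    have "0 \<le> (\<Sum>x0\<in>PiE J (V N). \<Sum>x1\<in>PiE J (V N). Pr H (Kp e0) (\<nu> N) x0 x1 *
            (Pr H (Kw e0) (\<nu> N) x0 x1 - 1) * (Pr H (Kv e0 (J - e0)) (\<nu> N) x0 x1 - 1))"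
      by (rule final_step(2)[where V="V N" and f="\<nu> N", OF hf(1,2,3,4,5) e0 cardH nufb])
    then show ?thesis unfolding aD_def avg_pair XV by simp
  qed
  have aP0: "0 \<le> aP N" for N
    unfolding aP_def
  proof (rule avg_nonneg)
    fix p assume "p \<in> Vprod (V N) J \<times> Vprod (V N) J"
    then obtain x0 x1 where p: "p = (x0, x1)" "x0 \<in> PiE J (V N)" "x1 \<in> PiE J (V N)"
      unfolding Vprod_def by blast
    have "0 \<le> Pr H (Kp e0) (\<nu> N) x0 x1"
      by (rule Pr_nonneg[OF pr _ _ p(2,3)]) (use hf(4) in auto)
    then show "0 \<le> (case p of (x0, x1) \<Rightarrow> Pr H (Kp e0) (\<nu> N) x0 x1)" using p by simp
  qed
  define \<delta> where "\<delta> = (\<lambda>N. aP N * aD N)"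
  have \<delta>0: "0 \<le> \<delta> N" for N unfolding \<delta>_def using aP0 aD0 by simp
  have "\<delta> \<longlonglongrightarrow> 1 * 0" unfolding \<delta>_def by (intro tendsto_intros aPl aDl)
  then have \<delta>l: "\<delta> \<longlonglongrightarrow> 0" by simp
  define r where "r = (\<lambda>N. root k (c N))"
  have "r \<longlonglongrightarrow> root k 1" unfolding r_def by (intro tendsto_intros c(1))
  then have rl: "r \<longlonglongrightarrow> 1" using k by simp
  define q where "q = (\<lambda>N. root k (sqrt (\<delta> N)))"
  have "q \<longlonglongrightarrow> root k (sqrt 0)" unfolding q_def by (intro tendsto_intros \<delta>l)
  then have ql: "q \<longlonglongrightarrow> 0" by simp
  have q0: "0 \<le> q N" for N unfolding q_def by (intro real_root_ge_zero real_sqrt_ge_zero \<delta>0)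
  have r0: "0 \<le> r N" for N unfolding r_def using c(2) by (intro real_root_ge_zero) auto
  define Bd where "Bd = (\<lambda>N. avg (Vprod (V N) J) (\<lambda>x. \<Prod>e'\<in>H. \<nu> N e' (proj e' x)))"
  have Bd0: "0 \<le> Bd N" for N
    unfolding Bd_def
  proof (rule avg_nonneg)
    fix x assume x: "x \<in> Vprod (V N) J"
    show "0 \<le> (\<Prod>e'\<in>H. \<nu> N e' (proj e' x))"
    proof (rule prod_nonneg)
      fix e assume e: "e \<in> H"
      have "proj e x \<in> PiE e (V N)" using x e hf(4) unfolding proj_def Vprod_def by (auto simp: PiE_iff)
      then show "0 \<le> \<nu> N e (proj e x)" using nu_nonneg[OF pr e] by blast
    qed
  qed
  define \<epsilon> where "\<epsilon> = (\<lambda>N. if r N \<le> 2 then 2 * q N else Bd N)"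
  have ev: "eventually (\<lambda>N. r N < 2) sequentially" using order_tendstoD(2)[OF rl] by simp
  have ev2: "eventually (\<lambda>N. 2 * q N = \<epsilon> N) sequentially"
    using ev by (rule eventually_mono) (simp add: \<epsilon>_def)
  have "(\<lambda>N. 2 * q N) \<longlonglongrightarrow> 2 * 0" by (intro tendsto_intros ql)
  then have \<epsilon>l: "\<epsilon> \<longlonglongrightarrow> 0" using Lim_transform_eventually[OF _ ev2] by simp
  have \<epsilon>0: "\<forall>N. 0 \<le> \<epsilon> N" unfolding \<epsilon>_def using q0 Bd0 by simp
  show ?thesis
  proof (intro exI[of _ \<epsilon>] conjI \<epsilon>l \<epsilon>0 allI impI)
    fix N f assume fb: "\<forall>e\<in>H. \<forall>x\<in>Vprod (V N) e. \<bar>f e x\<bar> \<le> \<nu> N e x"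
    let ?X = "Vprod (V N) J"
    define aF where "aF = \<bar>avg ?X (\<lambda>x. \<Prod>e'\<in>H. f e' (proj e' x))\<bar>"
    define aPP where "aPP = avg (?X \<times> ?X) (\<lambda>(x0, x1). PP H e0 f (\<nu> N) x0 x1)"
    define a\<Phi> where "a\<Phi> = avg (?X \<times> ?X) (\<lambda>(x0, x1). Pr H (Kp e0) f x0 x1)"
    define m where "m = (real (card ?X))^2"
    have m: "0 < m" unfolding m_def using cardpos by simp
    have fb': "\<forall>e\<in>H. \<forall>y\<in>PiE e (V N). \<bar>f e y\<bar> \<le> \<nu> N e y" using fb by (simp add: Vprod_def)
    have cl: "aF ^ k \<le> c N * \<bar>aPP\<bar>" using cb fb unfolding aF_def aPP_def k_def by blast
    have fs: "((\<Sum>x0\<in>PiE J (V N). \<Sum>x1\<in>PiE J (V N). PP H e0 f (\<nu> N) x0 x1) - (\<Sum>x0\<in>PiE J (V N). \<Sum>x1\<in>PiE J (V N). Pr H (Kp e0) f x0 x1))^2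
      \<le> (\<Sum>x0\<in>PiE J (V N). \<Sum>x1\<in>PiE J (V N). Pr H (Kp e0) (\<nu> N) x0 x1) *
         (\<Sum>x0\<in>PiE J (V N). \<Sum>x1\<in>PiE J (V N). Pr H (Kp e0) (\<nu> N) x0 x1 * (Pr H (Kw e0) (\<nu> N) x0 x1 - 1) * (Pr H (Kv e0 (J - e0)) (\<nu> N) x0 x1 - 1))"
      by (rule final_step(1)[where V="V N" and f=f and \<nu>="\<nu> N", OF hf(1,2,3,4,5) e0 cardH fb'])
    have "(aPP - a\<Phi>)^2 \<le> aP N * aD N"
    proof -
      have gen: "\<And>a b M::real. (a / M - b / M)^2 = (a - b)^2 / M^2"
        by (simp add: power_divide diff_divide_distrib[symmetric])
      have "(aPP - a\<Phi>)^2 = ((\<Sum>x0\<in>PiE J (V N). \<Sum>x1\<in>PiE J (V N). PP H e0 f (\<nu> N) x0 x1) - (\<Sum>x0\<in>PiE J (V N). \<Sum>x1\<in>PiE J (V N). Pr H (Kp e0) f x0 x1))^2 / m^2"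
        unfolding aPP_def a\<Phi>_def avg_pair XV m_def[unfolded XV] by (rule gen)
      also have "\<dots> \<le> ((\<Sum>x0\<in>PiE J (V N). \<Sum>x1\<in>PiE J (V N). Pr H (Kp e0) (\<nu> N) x0 x1) *
         (\<Sum>x0\<in>PiE J (V N). \<Sum>x1\<in>PiE J (V N). Pr H (Kp e0) (\<nu> N) x0 x1 * (Pr H (Kw e0) (\<nu> N) x0 x1 - 1) * (Pr H (Kv e0 (J - e0)) (\<nu> N) x0 x1 - 1))) / m^2"
        using fs m by (intro divide_right_mono) auto
      also have "\<dots> = aP N * aD N"
        unfolding aP_def aD_def avg_pair XV m_def[unfolded XV] by (simp add: power2_eq_square)
      finally show ?thesis .
    qed
    then have "sqrt ((aPP - a\<Phi>)^2) \<le> sqrt (\<delta> N)" unfolding \<delta>_def by (rule real_sqrt_le_mono)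
    then have dif: "\<bar>aPP - a\<Phi>\<bar> \<le> sqrt (\<delta> N)" by simp
    have phi_eq: "a\<Phi> = avg (Vprod (V N) e0 \<times> Vprod (V N) e0) (\<lambda>(x0, x1). \<Prod>w\<in>cube e0. f e0 (cpt e0 w x0 x1))"
    proof -
      have "a\<Phi> = avg (PiE J (V N) \<times> PiE J (V N)) (\<lambda>(x0, x1). (\<lambda>a b. \<Prod>w\<in>cube e0. f e0 (cpt e0 w a b)) (restrict x0 e0) (restrict x1 e0))"
        unfolding a\<Phi>_def XV Pr_Kp[OF e0 hf(5)] by (simp add: cpt_restrict[symmetric])
      also have "\<dots> = avg (PiE e0 (V N) \<times> PiE e0 (V N)) (\<lambda>(a, b). \<Prod>w\<in>cube e0. f e0 (cpt e0 w a b))"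
        by (rule marg2[OF e0J hf(1,2,3)])
      finally show ?thesis by (simp add: Vprod_def)
    qed
    have nrm: "cube_norm (V N) e0 (f e0) = root k a\<Phi>"
      unfolding cube_norm_def phi_eq k_def ..
    have aPhi0: "0 \<le> a\<Phi>"
    proof -
      have "0 \<le> (\<Sum>x0\<in>PiE J (V N). \<Sum>x1\<in>PiE J (V N). \<Prod>w\<in>cube e0. f e0 (cpt e0 w x0 x1))"
        by (rule phi_nonneg[OF hf(1,2,3) e0J e0ne])
      then show ?thesis unfolding a\<Phi>_def avg_pair XV Pr_Kp[OF e0 hf(5)] by simp
    qed
    have nrm0: "0 \<le> cube_norm (V N) e0 (f e0)" unfolding nrm using aPhi0 by (rule real_root_ge_zero)
    have "aF ^ k \<le> c N * (a\<Phi> + sqrt (\<delta> N))"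
    proof -
      have "\<bar>aPP\<bar> \<le> a\<Phi> + sqrt (\<delta> N)" using dif aPhi0 by linarith
      then show ?thesis using cl c(2) by (meson mult_left_mono order_trans)
    qed
    then have s1: "root k (aF ^ k) \<le> root k (c N * (a\<Phi> + sqrt (\<delta> N)))" by (rule real_root_le_mono[OF k])
    have s2: "root k (aF ^ k) = aF" unfolding aF_def by (rule real_root_power_cancel[OF k]) simp
    have s3: "root k (c N * (a\<Phi> + sqrt (\<delta> N))) = r N * root k (a\<Phi> + sqrt (\<delta> N))"
      unfolding r_def by (rule real_root_mult)
    have s4: "root k (a\<Phi> + sqrt (\<delta> N)) \<le> root k a\<Phi> + q N"
      unfolding q_def by (rule root_add_le[OF k aPhi0]) (simp add: \<delta>0)
    have s5: "aF \<le> r N * root k (a\<Phi> + sqrt (\<delta> N))" using s1 unfolding s2 s3 .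
    have s6: "r N * root k (a\<Phi> + sqrt (\<delta> N)) \<le> r N * (root k a\<Phi> + q N)"
      using s4 r0[of N] by (rule mult_left_mono)
    have main: "aF \<le> r N * (cube_norm (V N) e0 (f e0) + q N)"
      unfolding nrm using s5 s6 by (rule order_trans)
    have bd: "aF \<le> Bd N" unfolding aF_def Bd_def by (rule avgF_bound[where N=N and \<nu>=\<nu> and f=f, OF hs fb])
    show "\<bar>avg (Vprod (V N) J) (\<lambda>x. \<Prod>e'\<in>H. f e' (proj e' x))\<bar> \<le> 2 * cube_norm (V N) e0 (f e0) + \<epsilon> N"
    proof (cases "r N \<le> 2")
      case True
      have "r N * (cube_norm (V N) e0 (f e0) + q N) \<le> 2 * (cube_norm (V N) e0 (f e0) + q N)"
        using True nrm0 q0[of N] by (intro mult_right_mono) auto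
      then show ?thesis using main True unfolding aF_def \<epsilon>_def by simp
    next
      case False
      then show ?thesis using bd nrm0 unfolding aF_def \<epsilon>_def by simp
    qed
  qed
qed

theorem mainTheorem8:
  fixes J :: "'j set" and V :: "nat \<Rightarrow> 'j \<Rightarrow> 'v set" and d :: nat and H :: "'j set set"
    and \<nu> :: "nat \<Rightarrow> 'j set \<Rightarrow> ('j \<Rightarrow> 'v) \<Rightarrow> real"
  assumes "hypergraph_system J V d H"
    and "pseudorandom J V H \<nu>"
  shows "\<exists>C>0. \<exists>\<epsilon> :: nat \<Rightarrow> real. \<epsilon> \<longlonglongrightarrow> 0 \<and>
    (\<forall>N. \<forall>f :: 'j set \<Rightarrow> ('j \<Rightarrow> 'v) \<Rightarrow> real.
       (\<forall>e\<in>H. \<forall>x\<in>Vprod (V N) e. \<bar>f e x\<bar> \<le> \<nu> N e x) \<longrightarrow>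
       (\<forall>e\<in>H. \<bar>avg (Vprod (V N) J) (\<lambda>x. \<Prod>e'\<in>H. f e' (proj e' x))\<bar>
                \<le> C * cube_norm (V N) e (f e) + \<epsilon> N))"
proof -
  note hs = assms(1) and pr = assms(2)
  note hf = hs_facts[OF hs]
  have "\<forall>e0\<in>H. \<exists>\<epsilon>::nat \<Rightarrow> real. \<epsilon> \<longlonglongrightarrow> 0 \<and> (\<forall>N. 0 \<le> \<epsilon> N) \<and>
    (\<forall>N f. (\<forall>e\<in>H. \<forall>x\<in>Vprod (V N) e. \<bar>f e x\<bar> \<le> \<nu> N e x) \<longrightarrow>
       \<bar>avg (Vprod (V N) J) (\<lambda>x. \<Prod>e'\<in>H. f e' (proj e' x))\<bar> \<le> 2 * cube_norm (V N) e0 (f e0) + \<epsilon> N)"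
    using per_edge[OF hs pr] by blast
  then obtain E where E: "\<forall>e0\<in>H. E e0 \<longlonglongrightarrow> 0 \<and> (\<forall>N. 0 \<le> E e0 N) \<and>
    (\<forall>N f. (\<forall>e\<in>H. \<forall>x\<in>Vprod (V N) e. \<bar>f e x\<bar> \<le> \<nu> N e x) \<longrightarrow>
       \<bar>avg (Vprod (V N) J) (\<lambda>x. \<Prod>e'\<in>H. f e' (proj e' x))\<bar> \<le> 2 * cube_norm (V N) e0 (f e0) + E e0 N)"
    by (rule bchoice[elim_format]) blast
  define \<epsilon> where "\<epsilon> = (\<lambda>N. \<Sum>e\<in>H. E e N)"
  have "\<epsilon> \<longlonglongrightarrow> (\<Sum>e\<in>H. 0)" unfolding \<epsilon>_def by (rule tendsto_sum) (use E in blast)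
  then have \<epsilon>l: "\<epsilon> \<longlonglongrightarrow> 0" by simp
  show ?thesis
  proof (intro exI[of _ "2::real"] conjI exI[of _ \<epsilon>] \<epsilon>l allI impI ballI)
    show "(0::real) < 2" by simp
    fix N f e assume fb: "\<forall>e\<in>H. \<forall>x\<in>Vprod (V N) e. \<bar>f e x\<bar> \<le> \<nu> N e x" and e: "e \<in> H"
    have 1: "\<bar>avg (Vprod (V N) J) (\<lambda>x. \<Prod>e'\<in>H. f e' (proj e' x))\<bar> \<le> 2 * cube_norm (V N) e (f e) + E e N"
      using E e fb by blast
    have 2: "E e N \<le> \<epsilon> N" unfolding \<epsilon>_def
      by (rule member_le_sum[OF e]) (use E hf(5) in auto)
    show "\<bar>avg (Vprod (V N) J) (\<lambda>x. \<Prod>e'\<in>H. f e' (proj e' x))\<bar> \<le> 2 * cube_norm (V N) e (f e) + \<epsilon> N"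
      using 1 2 by linarith
  qed
qed

end
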